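(* Let $G$ be a connected graph. The interval function $I_G$ satisfies the axioms $(J0')$ and $(br)$ if and only if $G$ is a bridged graph.
   Context: Graphs are finite, simple and connected; $d$ is the shortest-path distance and $I_G(u,v)=\{w: d(u,w)+d(w,v)=d(u,v)\}$. A graph is bridged if it has no isometric cycle of length greater than $3$. For a map $R:V\times V\to 2^V$: $(J0')$: for pairwise distinct $u,x,y,v$, if $x\in R(u,y)$, $y\in R(x,v)$ and $R(u,y)\cap R(x,v)\subseteq\{u,x,y,v\}$ then $x\in R(u,v)$. $(br)$: for any $u,v,x,y,z$, if $R(x,y)=\{x,y\}$, $R(x,u)=\{x,u\}$, $R(v,y)=\{v,y\}$ and $z\in R(u,v)$, then $R(x,z)=\{x,z\}$ or $R(y,z)=\{y,z\}$. *)

theory Defs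
  imports Main
begin

definition simple_graph :: "'a set \<Rightarrow> ('a \<Rightarrow> 'a \<Rightarrow> bool) \<Rightarrow> bool" where
  "simple_graph V E \<longleftrightarrow> finite V \<and> V \<noteq> {} \<and>
     (\<forall>x y. E x y \<longrightarrow> x \<in> V \<and> y \<in> V) \<and>
     (\<forall>x y. E x y \<longrightarrow> E y x) \<and> (\<forall>x. \<not> E x x)"

definition walk :: "'a set \<Rightarrow> ('a \<Rightarrow> 'a \<Rightarrow> bool) \<Rightarrow> 'a \<Rightarrow> 'a \<Rightarrow> 'a list \<Rightarrow> bool" where
  "walk V E u v xs \<longleftrightarrow> xs \<noteq> [] \<and> hd xs = u \<and> last xs = v \<and> set xs \<subseteq> V \<and>
     (\<forall>i. Suc i < length xs \<longrightarrow> E (xs ! i) (xs ! Suc i))"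

definition connected_graph :: "'a set \<Rightarrow> ('a \<Rightarrow> 'a \<Rightarrow> bool) \<Rightarrow> bool" where
  "connected_graph V E \<longleftrightarrow> simple_graph V E \<and> (\<forall>u\<in>V. \<forall>v\<in>V. \<exists>xs. walk V E u v xs)"

definition gdist :: "'a set \<Rightarrow> ('a \<Rightarrow> 'a \<Rightarrow> bool) \<Rightarrow> 'a \<Rightarrow> 'a \<Rightarrow> nat" where
  "gdist V E u v = (LEAST n. \<exists>xs. walk V E u v xs \<and> length xs = Suc n)"

definition interval :: "'a set \<Rightarrow> ('a \<Rightarrow> 'a \<Rightarrow> bool) \<Rightarrow> 'a \<Rightarrow> 'a \<Rightarrow> 'a set" where
  "interval V E u v = {w \<in> V. gdist V E u w + gdist V E w v = gdist V E u v}"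

definition isometric_cycle :: "'a set \<Rightarrow> ('a \<Rightarrow> 'a \<Rightarrow> bool) \<Rightarrow> 'a list \<Rightarrow> bool" where
  "isometric_cycle V E cs \<longleftrightarrow> length cs \<ge> 3 \<and> distinct cs \<and> set cs \<subseteq> V \<and>
     (\<forall>i < length cs. E (cs ! i) (cs ! ((Suc i) mod length cs))) \<and>
     (\<forall>i < length cs. \<forall>j < length cs.
        gdist V E (cs ! i) (cs ! j) =
          min (nat \<bar>int i - int j\<bar>) (length cs - nat \<bar>int i - int j\<bar>))"

definition bridged :: "'a set \<Rightarrow> ('a \<Rightarrow> 'a \<Rightarrow> bool) \<Rightarrow> bool" where
  "bridged V E \<longleftrightarrow> (\<forall>cs. isometric_cycle V E cs \<longrightarrow> length cs \<le> 3)"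

definition axiom_J0' :: "'a set \<Rightarrow> ('a \<Rightarrow> 'a \<Rightarrow> 'a set) \<Rightarrow> bool" where
  "axiom_J0' V R \<longleftrightarrow> (\<forall>u\<in>V. \<forall>x\<in>V. \<forall>y\<in>V. \<forall>v\<in>V.
     distinct [u, x, y, v] \<longrightarrow> x \<in> R u y \<longrightarrow> y \<in> R x v \<longrightarrow>
     R u y \<inter> R x v \<subseteq> {u, x, y, v} \<longrightarrow> x \<in> R u v)"

definition axiom_br :: "'a set \<Rightarrow> ('a \<Rightarrow> 'a \<Rightarrow> 'a set) \<Rightarrow> bool" where
  "axiom_br V R \<longleftrightarrow> (\<forall>u\<in>V. \<forall>v\<in>V. \<forall>x\<in>V. \<forall>y\<in>V. \<forall>z\<in>V.
     R x y = {x, y} \<longrightarrow> R x u = {x, u} \<longrightarrow> R v y = {v, y} \<longrightarrow> z \<in> R u v \<longrightarrow>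
     R x z = {x, z} \<or> R y z = {y, z})"

end

theory Submission
  imports Defs
begin

locale cg =
  fixes V :: "'a set" and E :: "'a \<Rightarrow> 'a \<Rightarrow> bool"
  assumes conn: "connected_graph V E"
begin

abbreviation d where "d \<equiv> gdist V E"

lemma sg: "simple_graph V E" using conn unfolding connected_graph_def by blast
lemma EV1: "E x y \<Longrightarrow> x \<in> V" using sg unfolding simple_graph_def by blast
lemma EV2: "E x y \<Longrightarrow> y \<in> V" using sg unfolding simple_graph_def by blast
lemma Esym: "E x y \<Longrightarrow> E y x" using sg unfolding simple_graph_def by blast
lemma Eirr: "\<not> E x x" using sg unfolding simple_graph_def by blast
lemma Ene: "E x y \<Longrightarrow> x \<noteq> y" using Eirr by blast

lemma walk_exists: "u \<in> V \<Longrightarrow> v \<in> V \<Longrightarrow> \<exists>xs. walk V E u v xs"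
  using conn unfolding connected_graph_def by blast

lemma gdist_walk:
  assumes "u \<in> V" "v \<in> V"
  shows "\<exists>xs. walk V E u v xs \<and> length xs = Suc (d u v)"
proof -
  obtain xs where w: "walk V E u v xs" using walk_exists assms by blast
  then have "xs \<noteq> []" unfolding walk_def by simp
  then have "\<exists>n xs. walk V E u v xs \<and> length xs = Suc n" using w
    by (metis Suc_pred length_greater_0_conv)
  then show ?thesis unfolding gdist_def by (rule LeastI_ex)
qed

lemma gdist_le: "walk V E u v xs \<Longrightarrow> d u v \<le> length xs - 1"
proof -
  assume w: "walk V E u v xs"
  then have "xs \<noteq> []" unfolding walk_def by simp
  then have "walk V E u v xs \<and> length xs = Suc (length xs - 1)" using w by simp
  then show ?thesis unfolding gdist_def by (intro Least_le) blast
qed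

lemma walk_rev: "walk V E u v xs \<Longrightarrow> walk V E v u (rev xs)"
  unfolding walk_def
proof (intro conjI allI impI)
  assume h: "xs \<noteq> [] \<and> hd xs = u \<and> last xs = v \<and> set xs \<subseteq> V \<and> (\<forall>i. Suc i < length xs \<longrightarrow> E (xs ! i) (xs ! Suc i))"
  show "rev xs \<noteq> []" using h by simp
  show "hd (rev xs) = v" using h by (simp add: hd_rev)
  show "last (rev xs) = u" using h by (simp add: last_rev)
  show "set (rev xs) \<subseteq> V" using h by simp
  fix i assume i: "Suc i < length (rev xs)"
  have "E (xs ! (length xs - Suc (Suc i))) (xs ! Suc (length xs - Suc (Suc i)))"
    using h i by simp
  moreover have "Suc (length xs - Suc (Suc i)) = length xs - Suc i" using i by simp
  ultimately show "E (rev xs ! i) (rev xs ! Suc i)" using i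
    by (simp add: rev_nth Esym)
qed

lemma walk_app: "walk V E u v xs \<Longrightarrow> walk V E v w ys \<Longrightarrow> walk V E u w (xs @ tl ys)"
proof -
  assume a: "walk V E u v xs" and b: "walk V E v w ys"
  from a have xs: "xs \<noteq> []" "hd xs = u" "last xs = v" "set xs \<subseteq> V"
    "\<And>i. Suc i < length xs \<Longrightarrow> E (xs ! i) (xs ! Suc i)" unfolding walk_def by auto
  from b have ys: "ys \<noteq> []" "hd ys = v" "last ys = w" "set ys \<subseteq> V"
    "\<And>i. Suc i < length ys \<Longrightarrow> E (ys ! i) (ys ! Suc i)" unfolding walk_def by auto
  obtain y ys' where ysd: "ys = y # ys'" using ys(1) by (cases ys) auto
  have yv: "y = v" using ys(2) ysd by simp
  show ?thesis unfolding walk_def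
  proof (intro conjI allI impI)
    show "xs @ tl ys \<noteq> []" using xs by simp
    show "hd (xs @ tl ys) = u" using xs by simp
    show "last (xs @ tl ys) = w" using xs ys ysd yv by (cases ys') auto
    show "set (xs @ tl ys) \<subseteq> V" using xs ys ysd by auto
    fix i assume i: "Suc i < length (xs @ tl ys)"
    show "E ((xs @ tl ys) ! i) ((xs @ tl ys) ! Suc i)"
    proof (cases "Suc i < length xs")
      case True then show ?thesis using xs(5)[of i] by (simp add: nth_append)
    next
      case False
      then have ge: "i \<ge> length xs - 1" by simp
      define k where "k = i - (length xs - 1)"
      have ik: "i = length xs - 1 + k" using ge k_def by simp
      have lx: "length xs \<ge> 1" using xs(1) by (cases xs) auto
      have "Suc k < length ys" using i ik ysd lx by auto
      then have e: "E (ys ! k) (ys ! Suc k)" using ys(5) by blast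
      have l1: "(xs @ tl ys) ! i = ys ! k"
      proof (cases k)
        case 0
        then have "i = length xs - 1" using ik by simp
        then have "(xs @ tl ys) ! i = last xs" using xs(1) lx
          by (simp add: nth_append last_conv_nth)
        then show ?thesis using xs(3) yv ysd 0 by simp
      next
        case (Suc k')
        then have "i \<ge> length xs" using ik lx by simp
        then show ?thesis using ik Suc ysd lx by (simp add: nth_append)
      qed
      have l2: "(xs @ tl ys) ! Suc i = ys ! Suc k"
        using ik ysd lx False by (simp add: nth_append)
      show ?thesis using e l1 l2 by simp
    qed
  qed
qed

lemma tri: assumes "x \<in> V" "y \<in> V" "z \<in> V" shows "d x z \<le> d x y + d y z"
proof -
  obtain xs where a: "walk V E x y xs" "length xs = Suc (d x y)" using gdist_walk assms by blast
  obtain ys where b: "walk V E y z ys" "length ys = Suc (d y z)" using gdist_walk assms by blast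
  have "walk V E x z (xs @ tl ys)" using walk_app a b by blast
  then have "d x z \<le> length (xs @ tl ys) - 1" by (rule gdist_le)
  then show ?thesis using a b by simp
qed

lemma dsym: assumes "x \<in> V" "y \<in> V" shows "d x y = d y x"
proof -
  have "\<And>x y. x \<in> V \<Longrightarrow> y \<in> V \<Longrightarrow> d x y \<le> d y x"
  proof -
    fix x y assume "x \<in> V" "y \<in> V"
    then obtain xs where a: "walk V E y x xs" "length xs = Suc (d y x)" using gdist_walk by blast
    have "walk V E x y (rev xs)" using walk_rev a by blast
    from gdist_le[OF this] show "d x y \<le> d y x" using a by simp
  qed
  then show ?thesis using assms by (meson antisym)
qed

lemma d0: "x \<in> V \<Longrightarrow> d x x = 0"
proof -
  assume "x \<in> V"
  then have "walk V E x x [x]" unfolding walk_def by simp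
  from gdist_le[OF this] show ?thesis by simp
qed

lemma d0E: assumes "x \<in> V" "y \<in> V" "d x y = 0" shows "x = y"
proof -
  obtain xs where a: "walk V E x y xs" "length xs = Suc 0" using gdist_walk assms by fastforce
  then obtain z where "xs = [z]" by (cases xs) auto
  then show ?thesis using a unfolding walk_def by auto
qed

lemma d1: assumes "E x y" shows "d x y = 1"
proof -
  have "walk V E x y [x, y]" unfolding walk_def using assms EV1 EV2
    by (auto simp: less_Suc_eq)
  from gdist_le[OF this] have "d x y \<le> 1" by simp
  moreover have "d x y \<noteq> 0" using d0E EV1 EV2 Ene assms by blast
  ultimately show ?thesis by simp
qed

lemma d1E: assumes "x \<in> V" "y \<in> V" "d x y = 1" shows "E x y"
proof -
  obtain xs where a: "walk V E x y xs" "length xs = 2" using gdist_walk assms by fastforce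
  then obtain p q where "xs = [p, q]" by (cases xs; cases "tl xs") auto
  then show ?thesis using a unfolding walk_def by auto
qed

lemma dstep: assumes "x \<in> V" "y \<in> V" "d x y = Suc k"
  shows "\<exists>w. E x w \<and> d w y = k"
proof -
  obtain xs where a: "walk V E x y xs" "length xs = Suc (Suc k)" using gdist_walk assms by fastforce
  define w where "w = xs ! 1"
  have ex: "E x w" using a unfolding walk_def w_def
    by (metis One_nat_def Suc_less_eq hd_conv_nth length_greater_0_conv zero_less_Suc)
  obtain x0 xs' where xd: "xs = x0 # xs'" using a by (cases xs) auto
  have wt: "walk V E w y xs'" unfolding walk_def
  proof (intro conjI allI impI)
    show "xs' \<noteq> []" using a xd by auto
    show "hd xs' = w" using a xd unfolding w_def by (cases xs') auto
    show "last xs' = y" using a xd unfolding walk_def by (cases xs') auto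
    show "set xs' \<subseteq> V" using a xd unfolding walk_def by auto
    fix i assume "Suc i < length xs'"
    then show "E (xs' ! i) (xs' ! Suc i)" using a xd unfolding walk_def
      by (metis Suc_less_eq length_Cons nth_Cons_Suc)
  qed
  have "d w y \<le> k" using gdist_le[OF wt] a xd by simp
  moreover have "d x y \<le> d x w + d w y" using tri assms EV2[OF ex] by blast
  ultimately show ?thesis using ex d1[OF ex] assms by auto
qed

end

context cg
begin

lemma d1s: "E x y \<Longrightarrow> d x y = 1 \<and> d y x = 1"
  using d1 Esym by blast

lemma tr: assumes "x \<in> V" "y \<in> V" "z \<in> V"
  shows "d x z \<le> d x y + d y z \<and> d x z \<le> d y x + d y z \<and> d x z \<le> d x y + d z y \<and> d x z \<le> d y x + d z y"
  using tri[OF assms] dsym assms by metis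

lemma d2: assumes "E x y" "E y z" "x \<noteq> z" "\<not> E x z" shows "d x z = 2"
proof -
  have V: "x \<in> V" "y \<in> V" "z \<in> V" using assms EV1 EV2 by auto
  have "d x z \<le> 2" using tr[OF V(1,2,3)] d1s assms by fastforce
  moreover have "d x z \<noteq> 0" using d0E V assms by blast
  moreover have "d x z \<noteq> 1" using d1E V assms by blast
  ultimately show ?thesis by linarith
qed

lemma d2E: assumes "x \<in> V" "y \<in> V" "d x y = 2" shows "\<exists>t. E x t \<and> E t y"
proof -
  obtain t where t: "E x t" "d t y = 1" using dstep[of x y 1] assms by auto
  then have "E t y" using d1E EV2 assms by blast
  then show ?thesis using t by blast
qed

lemma geo: assumes "x \<in> V" "y \<in> V"
  shows "\<exists>f. f 0 = x \<and> f (d x y) = y \<and> (\<forall>i<d x y. E (f i) (f (Suc i))) \<and> (\<forall>i\<le>d x y. f i \<in> V \<and> d x (f i) = i)"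
  using assms
proof (induction "d x y" arbitrary: y)
  case 0
  then have "y = x" using d0E by (metis)
  then show ?case using 0 d0 by (intro exI[of _ "\<lambda>i. x"]) auto
next
  case (Suc k)
  have "d y x = Suc k" using Suc dsym by metis
  then obtain w where w: "E y w" "d w x = k" using dstep Suc by blast
  have wV: "w \<in> V" using w EV2 by blast
  have dxw: "d x w = k" using w dsym wV Suc by metis
  obtain f where f: "f 0 = x" "f k = w" "\<forall>i<k. E (f i) (f (Suc i))" "\<forall>i\<le>k. f i \<in> V \<and> d x (f i) = i"
    using Suc.hyps(1)[OF dxw[symmetric] Suc.prems(1) wV] dxw by auto
  define g where "g = f(Suc k := y)"
  have "g 0 = x" using f g_def by simp
  moreover have "g (d x y) = y" using g_def Suc by simp
  moreover have "\<forall>i<d x y. E (g i) (g (Suc i))"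
  proof (intro allI impI)
    fix i assume "i < d x y"
    then have "i < Suc k" using Suc by simp
    then show "E (g i) (g (Suc i))"
      using f w Esym g_def by (cases "i = k") auto
  qed
  moreover have "\<forall>i\<le>d x y. g i \<in> V \<and> d x (g i) = i"
  proof (intro allI impI)
    fix i assume "i \<le> d x y"
    then have "i \<le> Suc k" using Suc by simp
    then show "g i \<in> V \<and> d x (g i) = i"
      using f g_def Suc by (cases "i = Suc k") auto
  qed
  ultimately show ?case by blast
qed

definition SBump :: "'a \<Rightarrow> nat \<Rightarrow> nat \<Rightarrow> (nat \<Rightarrow> 'a) \<Rightarrow> bool" where
  "SBump q k m T \<longleftrightarrow> q \<in> V \<and> (m = 2 \<or> m = 3) \<and> (\<forall>i\<le>m. T i \<in> V) \<and> (\<forall>i<m. E (T i) (T (Suc i)))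
     \<and> d q (T 0) = k \<and> d q (T m) = k \<and> (\<forall>i. 0 < i \<and> i < m \<longrightarrow> d q (T i) = Suc k) \<and> d (T 0) (T m) = m"

definition noSB :: "nat \<Rightarrow> bool" where
  "noSB N \<longleftrightarrow> (\<forall>q k m T. SBump q k m T \<longrightarrow> N \<le> 2*k+m)"

definition nsb :: bool where
  "nsb \<longleftrightarrow> (\<forall>q k m T. \<not> SBump q k m T)"

definition noC5 :: bool where
  "noC5 \<longleftrightarrow> (\<forall>cs. isometric_cycle V E cs \<longrightarrow> length cs \<noteq> 5)"

definition tcl :: "nat \<Rightarrow> bool" where
  "tcl h \<longleftrightarrow> (\<forall>q x y. q \<in> V \<longrightarrow> E x y \<longrightarrow> d q x = h \<longrightarrow> d q y = h \<longrightarrow> (\<exists>w. E w x \<and> E w y \<and> Suc (d q w) = h))"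

lemma sb2: assumes "q \<in> V" "d q u = k" "d q v = k" "d q z = Suc k" "E u z" "E z v" "d u v = 2"
  shows "SBump q k 2 (\<lambda>i. [u, z, v] ! i)"
  using assms EV1 EV2 unfolding SBump_def
  by (auto simp: less_Suc_eq le_Suc_eq numeral_2_eq_2)

lemma sb3: assumes "q \<in> V" "d q u = k" "d q v = k" "d q z1 = Suc k" "d q z2 = Suc k"
  "E u z1" "E z1 z2" "E z2 v" "d u v = 3"
  shows "SBump q k 3 (\<lambda>i. [u, z1, z2, v] ! i)"
  using assms EV1 EV2 unfolding SBump_def
  by (auto simp: less_Suc_eq le_Suc_eq numeral_3_eq_3)

lemma sb2_le: assumes "noSB N" "q \<in> V" "d q u = k" "d q v = k" "d q z = Suc k" "E u z" "E z v" "d u v = 2"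
  shows "N \<le> 2*k+2"
  using sb2[OF assms(2-)] assms(1) unfolding noSB_def by blast

lemma sb3_le: assumes "noSB N" "q \<in> V" "d q u = k" "d q v = k" "d q z1 = Suc k" "d q z2 = Suc k"
  "E u z1" "E z1 z2" "E z2 v" "d u v = 3"
  shows "N \<le> 2*k+3"
  using sb3[OF assms(2-)] assms(1) unfolding noSB_def by blast

lemma nsb_noSB: "nsb \<Longrightarrow> noSB N" unfolding nsb_def noSB_def by blast

lemma sb2_F: assumes "nsb" "q \<in> V" "d q u = k" "d q v = k" "d q z = Suc k" "E u z" "E z v" "d u v = 2"
  shows False
  using sb2[OF assms(2-)] assms(1) unfolding nsb_def by blast

lemma c5_iso: assumes "E a b" "E b c" "E c x" "E x e" "E e a"
  "\<not> E a c" "\<not> E a x" "\<not> E b x" "\<not> E b e" "\<not> E c e"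
  "a \<noteq> c" "a \<noteq> x" "b \<noteq> x" "b \<noteq> e" "c \<noteq> e"
  shows "isometric_cycle V E [a, b, c, x, e]"
proof -
  have V: "a \<in> V" "b \<in> V" "c \<in> V" "x \<in> V" "e \<in> V" using assms EV1 by auto
  have ne: "a \<noteq> b" "b \<noteq> c" "c \<noteq> x" "x \<noteq> e" "e \<noteq> a" using assms Ene by auto
  have D1: "d a b = 1" "d b c = 1" "d c x = 1" "d x e = 1" "d e a = 1"
       "d b a = 1" "d c b = 1" "d x c = 1" "d e x = 1" "d a e = 1" using assms d1s by auto
  have D2: "d a c = 2" "d a x = 2" "d b x = 2" "d b e = 2" "d c e = 2"
    using d2 assms Esym by metis+
  have D2': "d c a = 2" "d x a = 2" "d x b = 2" "d e b = 2" "d e c = 2"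
    using D2 dsym V by metis+
  have D0: "d a a = 0" "d b b = 0" "d c c = 0" "d x x = 0" "d e e = 0" using d0 V by auto
  show ?thesis unfolding isometric_cycle_def
  proof (intro conjI allI impI)
    show "3 \<le> length [a, b, c, x, e]" by simp
    show "distinct [a, b, c, x, e]" using ne assms by auto
    show "set [a, b, c, x, e] \<subseteq> V" using V by auto
    fix i assume i: "i < length [a, b, c, x, e]"
    then have "i = 0 \<or> i = 1 \<or> i = 2 \<or> i = 3 \<or> i = 4" by auto
    then show "E ([a, b, c, x, e] ! i) ([a, b, c, x, e] ! (Suc i mod length [a, b, c, x, e]))"
      using assms by auto
  next
    fix i k assume i: "i < length [a, b, c, x, e]" and k: "k < length [a, b, c, x, e]"
    then have "i = 0 \<or> i = 1 \<or> i = 2 \<or> i = 3 \<or> i = 4" "k = 0 \<or> k = 1 \<or> k = 2 \<or> k = 3 \<or> k = 4" by auto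
    then show "d ([a, b, c, x, e] ! i) ([a, b, c, x, e] ! k) =
          min (nat \<bar>int i - int k\<bar>) (length [a, b, c, x, e] - nat \<bar>int i - int k\<bar>)"
      using D0 D1 D2 D2' by (elim disjE) auto
  qed
qed

lemma c5_F: assumes "noC5" "E a b" "E b c" "E c x" "E x e" "E e a"
  "\<not> E a c" "\<not> E a x" "\<not> E b x" "\<not> E b e" "\<not> E c e"
  "a \<noteq> c" "a \<noteq> x" "b \<noteq> x" "b \<noteq> e" "c \<noteq> e"
  shows False
  using c5_iso[OF assms(2-)] assms(1) unfolding noC5_def by fastforce

end

context cg
begin

lemma tcf: assumes nc5: "noC5" and ns: "noSB N" and hN: "2*h+1 < N"
  shows "tcl h"
  unfolding tcl_def
proof (intro allI impI)
  fix q x y assume qV: "q \<in> V" and exy: "E x y" and dx: "d q x = h" and dy: "d q y = h"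
  have xV: "x \<in> V" and yV: "y \<in> V" using exy EV1 EV2 by auto
  show "\<exists>w. E w x \<and> E w y \<and> Suc (d q w) = h"
  proof (rule ccontr)
    assume nw: "\<not> (\<exists>w. E w x \<and> E w y \<and> Suc (d q w) = h)"
    have "h \<noteq> 0" using dx dy d0E qV xV yV Ene exy by metis
    then obtain h' where hh: "h = Suc h'" by (cases h) auto
    have "h' \<noteq> 0"
    proof
      assume "h' = 0"
      then have "E q x" "E q y" using d1E dx dy hh qV xV yV by auto
      then show False using nw d0 qV hh \<open>h' = 0\<close> Esym by auto
    qed
    have "d x q = Suc h'" using dx hh dsym qV xV by metis
    then obtain x' where x': "E x x'" "d x' q = h'" using dstep xV qV by blast
    have "d y q = Suc h'" using dy hh dsym qV yV by metis
    then obtain y' where y': "E y y'" "d y' q = h'" using dstep yV qV by blast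
    have x'V: "x' \<in> V" and y'V: "y' \<in> V" using x' y' EV2 by auto
    have qx': "d q x' = h'" and qy': "d q y' = h'" using x' y' dsym qV x'V y'V by metis+
    have nx'y: "\<not> E x' y" using nw x' qx' hh Esym by blast
    have nxy': "\<not> E x y'" using nw y' qy' hh Esym by blast
    have x'y': "x' \<noteq> y'" using nw x' y' qx' hh Esym by blast
    have x'ny: "x' \<noteq> y" using qx' dy hh by auto
    have xny': "x \<noteq> y'" using qy' dx hh by auto
    have dx'y: "d x' y = 2" using d2[of x' x y] x' exy Esym nx'y x'ny by blast
    have dxy': "d x y' = 2" using d2[of x y y'] y' exy nxy' xny' by blast
    have le3: "d x' y' \<le> 3" using tr[OF x'V yV y'V] dx'y d1s y' by fastforce
    have ge1: "d x' y' \<noteq> 0" using d0E x'V y'V x'y' by blast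
    consider "d x' y' = 1" | "d x' y' = 2" | "d x' y' = 3" using le3 ge1 by linarith
    then show False
    proof cases
      case 1
      have "N \<le> 2*1+2"
        by (rule sb2_le[OF ns x'V, of x 1 y' y]) (use 1 x' y' exy dx'y dxy' d1s in auto)
      then show False using hN hh \<open>h' \<noteq> 0\<close> by linarith
    next
      case 2
      then obtain t where t: "E x' t" "E t y'" using d2E x'V y'V by blast
      have tV: "t \<in> V" using t EV2 by blast
      have tnx: "t \<noteq> x" using t nxy' by blast
      have tny: "t \<noteq> y" using t nx'y by blast
      have qt: "d q t \<le> Suc h'" using tr[OF qV x'V tV] qx' d1s t by fastforce
      consider "E t x" "E t y" | "E t x" "\<not> E t y" | "\<not> E t x" "E t y" | "\<not> E t x" "\<not> E t y" by blast
      then show False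
      proof cases
        case 1
        have qtn: "d q t \<noteq> h'" using nw 1 hh by blast
        have qt2: "h' \<le> d q t" using tr[OF qV tV xV] dx hh d1s 1 by fastforce
        then have "d q t = Suc h'" using qt qt2 qtn by linarith
        then have "N \<le> 2*h'+2"
          using sb2_le[OF ns qV qx' qy', of t] t 2 by blast
        then show False using hN hh by linarith
      next
        case 2
        have "d t y = 2" using d2[of t x y] 2 exy tny by blast
        then have "N \<le> 2*1+2"
          using sb2_le[OF ns tV, of x 1 y' y] 2 t exy y' dxy' d1s by auto
        then show False using hN hh \<open>h' \<noteq> 0\<close> by linarith
      next
        case 3
        have "d x t = 2" using d2[of x y t] 3 exy tnx Esym by metis
        then have "N \<le> 2*1+2"
          using sb2_le[OF ns x'V, of x 1 t y] 3 t exy x' dx'y d1s Esym by auto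
        then show False using hN hh \<open>h' \<noteq> 0\<close> by linarith
      next
        case 4
        show False
          by (rule c5_F[OF nc5, of x' x y y' t])
             (use 4 x' y' t exy nx'y nxy' x'y' x'ny xny' tnx tny Esym 2 d1s in auto)
      qed
    next
      case 3
      then have "N \<le> 2*h'+3"
        using sb3_le[OF ns qV qx' qy', of x y] dx dy hh x' y' exy Esym by auto
      then show False using hN hh by linarith
    qed
  qed
qed

end

context cg
begin

lemma nsb_tcl: "nsb \<Longrightarrow> noC5 \<Longrightarrow> tcl h"
  using tcf[of "2*h+2" h] nsb_noSB by auto

lemma iso_facts:
  assumes "isometric_cycle V E cs"
  shows "\<forall>i<length cs. E (cs ! i) (cs ! (Suc i mod length cs))"
    "\<forall>i k. i \<le> k \<longrightarrow> k < length cs \<longrightarrow> d (cs ! i) (cs ! k) = min (k - i) (length cs - (k - i))"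
    "\<forall>i<length cs. cs ! i \<in> V"
proof -
  show "\<forall>i<length cs. E (cs ! i) (cs ! (Suc i mod length cs))" using assms unfolding isometric_cycle_def by blast
  show "\<forall>i<length cs. cs ! i \<in> V" using assms unfolding isometric_cycle_def by auto
  show "\<forall>i k. i \<le> k \<longrightarrow> k < length cs \<longrightarrow> d (cs ! i) (cs ! k) = min (k - i) (length cs - (k - i))"
  proof (intro allI impI)
    fix i k assume "i \<le> k" "k < length cs"
    moreover have "nat \<bar>int i - int k\<bar> = k - i" using \<open>i \<le> k\<close> by simp
    ultimately show "d (cs ! i) (cs ! k) = min (k - i) (length cs - (k - i))"
      using assms unfolding isometric_cycle_def by (metis le_less_trans)
  qed
qed

theorem nsb_bridged: assumes ns: "nsb" and nc5: "noC5" shows "bridged V E"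
  unfolding bridged_def
proof (intro allI impI)
  fix cs assume ic: "isometric_cycle V E cs"
  show "length cs \<le> 3"
  proof (rule ccontr)
    assume "\<not> length cs \<le> 3"
    then have n4: "length cs \<ge> 4" by simp
    define n where "n = length cs"
    define c where "c = (\<lambda>i. cs ! i)"
    have hE: "\<And>i. i < n \<Longrightarrow> E (c i) (c (Suc i mod n))" using iso_facts(1)[OF ic] n_def c_def by blast
    have hD: "\<And>i k. i \<le> k \<Longrightarrow> k < n \<Longrightarrow> d (c i) (c k) = min (k - i) (n - (k - i))"
      using iso_facts(2)[OF ic] n_def c_def by blast
    have hV: "\<And>i. i < n \<Longrightarrow> c i \<in> V" using iso_facts(3)[OF ic] n_def c_def by blast
    have hE2: "\<And>i. Suc i < n \<Longrightarrow> E (c i) (c (Suc i))"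
    proof -
      fix i assume "Suc i < n"
      then show "E (c i) (c (Suc i))" using hE[of i] by simp
    qed
    have n4': "n \<ge> 4" using n4 n_def by simp
    show False
    proof (cases "even n")
      case True
      then obtain M where M: "n = 2*M" by blast
      have M2: "M \<ge> 2" using M n4' by linarith
      have "d (c 0) (c (M-1)) = M - 1" using hD[of 0 "M-1"] M M2 by simp
      moreover have "d (c 0) (c (M+1)) = M - 1" using hD[of 0 "M+1"] M M2 by simp
      moreover have "d (c 0) (c M) = Suc (M-1)" using hD[of 0 M] M M2 by simp
      moreover have "E (c (M-1)) (c M)" using hE2[of "M-1"] M M2 by simp
      moreover have "E (c M) (c (M+1))" using hE2[of "M"] M M2 by simp
      moreover have "d (c (M-1)) (c (M+1)) = 2" using hD[of "M-1" "M+1"] M M2 by simp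
      moreover have "c 0 \<in> V" using hV M M2 by simp
      ultimately show False using sb2_F[OF ns] by blast
    next
      case False
      then obtain M where M: "n = 2*M+1" using oddE by blast
      have M2: "M \<ge> 2" using M n4' by linarith
      show False
      proof (cases "M = 2")
        case True
        then show False using nc5 ic M n_def unfolding noC5_def by auto
      next
        case False
        then have M3: "M \<ge> 3" using M2 by simp
        have tc: "tcl M" using nsb_tcl ns nc5 by blast
        have c0V: "c 0 \<in> V" using hV M M3 by simp
        have e1: "E (c M) (c (M+1))" using hE2[of M] M M3 by simp
        have dM: "d (c 0) (c M) = M" using hD[of 0 M] M M3 by simp
        have dM1: "d (c 0) (c (M+1)) = M" using hD[of 0 "M+1"] M M3 by simp
        obtain w where w: "E w (c M)" "E w (c (M+1))" "Suc (d (c 0) w) = M"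
          using tc c0V e1 dM dM1 unfolding tcl_def by blast
        have wV: "w \<in> V" using w EV1 by blast
        have cV: "c (M-1) \<in> V" "c M \<in> V" "c (M+1) \<in> V" "c (M+2) \<in> V" using hV M M3 by auto
        have e0: "E (c (M-1)) (c M)" using hE2[of "M-1"] M M3 by simp
        have e2: "E (c (M+1)) (c (M+2))" using hE2[of "M+1"] M M3 by simp
        have dA: "d (c 0) (c (M-1)) = M - 1" using hD[of 0 "M-1"] M M3 by simp
        have dB: "d (c 0) (c (M+2)) = M - 1" using hD[of 0 "M+2"] M M3 by simp
        have d02: "d (c (M-1)) (c (M+1)) = 2" using hD[of "M-1" "M+1"] M M3 by simp
        have d13: "d (c M) (c (M+2)) = 2" using hD[of "M" "M+2"] M M3 by simp
        have d03: "d (c (M-1)) (c (M+2)) = 3" using hD[of "M-1" "M+2"] M M3 by simp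
        have wa: "E w (c (M-1))"
        proof -
          have le: "d w (c (M-1)) \<le> 2" using tr[OF wV cV(2) cV(1)] w d1s e0 by fastforce
          have n0: "d w (c (M-1)) \<noteq> 0"
          proof
            assume "d w (c (M-1)) = 0"
            then have "w = c (M-1)" using d0E wV cV by blast
            then show False using w(2) d02 d1 by simp
          qed
          have n2: "d w (c (M-1)) \<noteq> 2"
          proof
            assume h2: "d w (c (M-1)) = 2"
            have "d (c 0) w = M - 1" using w by simp
            moreover have "d (c 0) (c M) = Suc (M - 1)" using dM M3 by simp
            ultimately show False using sb2_F[OF ns c0V _ dA, of w "c M"] w e0 Esym h2 by blast
          qed
          show ?thesis using le n0 n2 d1E wV cV by (metis One_nat_def le_SucE le_zero_eq numeral_2_eq_2)
        qed
        have wb: "E w (c (M+2))"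
        proof -
          have le: "d w (c (M+2)) \<le> 2" using tr[OF wV cV(3) cV(4)] w d1s e2 by fastforce
          have n0: "d w (c (M+2)) \<noteq> 0"
          proof
            assume "d w (c (M+2)) = 0"
            then have "w = c (M+2)" using d0E wV cV by blast
            then show False using w(1) d13 d1 Esym by fastforce
          qed
          have n2: "d w (c (M+2)) \<noteq> 2"
          proof
            assume h2: "d w (c (M+2)) = 2"
            have "d (c 0) w = M - 1" using w by simp
            moreover have "d (c 0) (c (M+1)) = Suc (M - 1)" using dM1 M3 by simp
            ultimately show False using sb2_F[OF ns c0V _ dB, of w "c (M+1)"] w e2 Esym h2 by blast
          qed
          show ?thesis using le n0 n2 d1E wV cV by (metis One_nat_def le_SucE le_zero_eq numeral_2_eq_2)
        qed
        have "d (c (M-1)) (c (M+2)) \<le> 2" using tr[OF cV(1) wV cV(4)] wa wb d1s by fastforce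
        then show False using d03 by simp
      qed
    qed
  qed
qed

lemma intv: "w \<in> interval V E u v \<longleftrightarrow> w \<in> V \<and> d u w + d w v = d u v"
  unfolding interval_def by simp

lemma intv_edge: assumes "a \<in> V" "b \<in> V"
  shows "interval V E a b = {a, b} \<longleftrightarrow> d a b \<le> 1"
proof
  assume h: "interval V E a b = {a, b}"
  show "d a b \<le> 1"
  proof (rule ccontr)
    assume "\<not> d a b \<le> 1"
    then obtain k where k: "d a b = Suc k" "k \<ge> 1" by (cases "d a b") auto
    then obtain w where w: "E a w" "d w b = k" using dstep assms by blast
    have wV: "w \<in> V" using w EV2 by blast
    have "d a w + d w b = d a b" using w k d1 by simp
    then have "w \<in> interval V E a b" using intv wV by blast
    moreover have "w \<noteq> a" using w Ene by blast
    moreover have "w \<noteq> b" using w k d0 assms by auto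
    ultimately show False using h by blast
  qed
next
  assume h: "d a b \<le> 1"
  show "interval V E a b = {a, b}"
  proof
    show "interval V E a b \<subseteq> {a, b}"
    proof
      fix w assume "w \<in> interval V E a b"
      then have w: "w \<in> V" "d a w + d w b = d a b" using intv by auto
      then have "d a w = 0 \<or> d w b = 0" using h by linarith
      then show "w \<in> {a, b}" using d0E w assms by blast
    qed
    show "{a, b} \<subseteq> interval V E a b"
      using assms d0 intv dsym by auto
  qed
qed

end

context cg
begin

lemma d_le1E: "x \<in> V \<Longrightarrow> y \<in> V \<Longrightarrow> d x y \<le> 1 \<Longrightarrow> x = y \<or> E x y"
  using d0E d1E by (metis One_nat_def le_SucE le_zero_eq)

theorem nsb_br: assumes ns: "nsb" and nc5: "noC5" shows "axiom_br V (interval V E)"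
  unfolding axiom_br_def
proof (intro ballI impI)
  fix u v x y z
  assume V: "u \<in> V" "v \<in> V" "x \<in> V" "y \<in> V" "z \<in> V"
  assume h1: "interval V E x y = {x, y}" and h2: "interval V E x u = {x, u}"
    and h3: "interval V E v y = {v, y}" and h4: "z \<in> interval V E u v"
  have xy: "d x y \<le> 1" using h1 intv_edge V by blast
  have xu: "d x u \<le> 1" using h2 intv_edge V by blast
  have vy: "d v y \<le> 1" using h3 intv_edge V by blast
  have zz: "d u z + d z v = d u v" using h4 intv by blast
  show "interval V E x z = {x, z} \<or> interval V E y z = {y, z}"
  proof (rule ccontr)
    assume "\<not> (interval V E x z = {x, z} \<or> interval V E y z = {y, z})"
    then have xz: "d x z \<ge> 2" and yz: "d y z \<ge> 2" using intv_edge V by auto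
    have S: "\<And>a b. a \<in> V \<Longrightarrow> b \<in> V \<Longrightarrow> d a b = d b a" using dsym by blast
    have T: "\<And>a b c. a \<in> V \<Longrightarrow> b \<in> V \<Longrightarrow> c \<in> V \<Longrightarrow> d a c \<le> d a b + d b c" using tri by blast
    have t1: "d x z \<le> d x u + d u z" using T V by blast
    have t2: "d y z \<le> d y v + d v z" using T V by blast
    have svy: "d y v = d v y" using S V by blast
    have szv: "d v z = d z v" using S V by blast
    have uz1: "d u z \<ge> 1" using t1 xz xu by linarith
    have zv1: "d z v \<ge> 1" using t2 yz vy svy szv by linarith
    show False
    proof (cases "x = y")
      case True
      have t3: "d x z \<le> d x v + d v z" using T V by blast
      have t4: "d u v \<le> d u x + d x v" using T V by blast
      have sux: "d u x = d x u" using S V by blast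
      have t5: "d x v \<le> d x y + d y v" using T V by blast
      have "d x y = 0" using True d0 V by simp
      then have dxv: "d x v \<le> 1" using t5 svy vy by linarith
      have duv: "d u v = 2" "d u z = 1" "d z v = 1" using zz t4 sux xu dxv uz1 zv1 by linarith+
      have "d x u = 1" "d x v = 1" "d x z = 2" using t1 t3 xz xu dxv duv szv by linarith+
      moreover have "E u z" "E z v" using duv d1E V by auto
      ultimately show False using sb2_F[OF ns V(3), of u 1 v z] duv by auto
    next
      case False
      then have dxy: "d x y = 1" using xy d0E V by (metis le_SucE le_zero_eq One_nat_def)
      have t6: "d u v \<le> d u x + d x y + d y v"
        using T[of u x v] T[of x y v] V by fastforce
      have sux: "d u x = d x u" using S V by blast
      have uv3: "d u v \<le> 3" using t6 sux xu dxy vy svy by linarith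
      consider "d u v = 2" | "d u v = 3" using uv3 zz uz1 zv1 by linarith
      then show False
      proof cases
        case 1
        have duz: "d u z = 1" "d z v = 1" using 1 zz uz1 zv1 by linarith+
        have dxu: "d x u = 1" using t1 xz xu duz by linarith
        have dyv: "d y v = 1" using t2 yz vy svy szv duz by linarith
        have dxz: "d x z = 2" using t1 xz dxu duz by linarith
        have dyz: "d y z = 2" using t2 yz dyv szv duz by linarith
        have Euz: "E u z" and Ezv: "E z v" using duz d1E V by auto
        have Exu: "E x u" and Eyv: "E y v" and Exy: "E x y" using dxu dyv dxy d1E V by auto
        have yu: "d y u \<le> 2" using T[of y x u] V dxy dxu S by fastforce
        have xv: "d x v \<le> 2" using T[of x y v] V dxy dyv by fastforce
        show False
        proof (cases "d y u \<le> 1")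
          case True
          have "d y u \<noteq> 0"
          proof
            assume "d y u = 0" then have "y = u" using d0E V by blast
            then show False using dyz duz by simp
          qed
          then have "d y u = 1" using True by linarith
          then show False using sb2_F[OF ns V(4), of u 1 v z] dyv dyz Euz Ezv 1 by auto
        next
          case False
          then have dyu: "d y u = 2" using yu by linarith
          show False
          proof (cases "d x v \<le> 1")
            case True
            have "d x v \<noteq> 0"
            proof
              assume "d x v = 0" then have "x = v" using d0E V by blast
              then show False using dxz duz szv by simp
            qed
            then have "d x v = 1" using True by linarith
            then show False using sb2_F[OF ns V(3), of u 1 v z] dxu dxz Euz Ezv 1 by auto
          next
            case False
            then have dxv: "d x v = 2" using xv by linarith
            have ne: "\<And>a b. a \<in> V \<Longrightarrow> b \<in> V \<Longrightarrow> d a b = 2 \<Longrightarrow> a \<noteq> b \<and> \<not> E a b"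
              using d0 d1 by fastforce
            have "u \<noteq> y \<and> \<not> E u y" using ne[of u y] dyu S V by auto
            moreover have "u \<noteq> v \<and> \<not> E u v" using ne[of u v] 1 V by auto
            moreover have "x \<noteq> v \<and> \<not> E x v" using ne[of x v] dxv V by auto
            moreover have "x \<noteq> z \<and> \<not> E x z" using ne[of x z] dxz V by auto
            moreover have "y \<noteq> z \<and> \<not> E y z" using ne[of y z] dyz V by auto
            ultimately show False
              using c5_F[OF nc5, of u x y v z] Exu Exy Eyv Ezv Euz Esym by blast
          qed
        qed
      next
        case 2
        have dxu: "d x u = 1" and dyv: "d y v = 1" using 2 t6 sux xu dxy vy svy by linarith+
        have duy: "d u y = 2"
        proof -
          have "d u y \<le> d u x + d x y" using T V by blast
          moreover have "d u v \<le> d u y + d y v" using T V by blast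
          ultimately show ?thesis using 2 sux dxu dxy dyv by linarith
        qed
        have dxv: "d x v = 2"
        proof -
          have "d x v \<le> d x y + d y v" using T V by blast
          moreover have "d u v \<le> d u x + d x v" using T V by blast
          ultimately show ?thesis using 2 sux dxu dxy dyv by linarith
        qed
        have Exu: "E x u" and Eyv: "E y v" using dxu dyv d1E V by auto
        consider "d u z = 1" | "d u z = 2" using zz 2 uz1 zv1 by linarith
        then show False
        proof cases
          case 1
          have dzv: "d z v = 2" using 1 zz 2 by linarith
          have dxz: "d x z = 2" using t1 xz dxu 1 by linarith
          have Euz: "E u z" using 1 d1E V by auto
          have "d v x = 2" "d v z = 2" "d v u = Suc 2" using dxv dzv 2 S V by auto
          then show False using sb2_F[OF ns V(2), of x 2 z u] Exu Euz dxz by blast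
        next
          case 2
          have dzv: "d z v = 1" using 2 zz \<open>d u v = 3\<close> by linarith
          have dyz: "d y z = 2" using t2 yz dyv szv dzv by linarith
          have Ezv: "E z v" using dzv d1E V by auto
          have "d u z = 2" "d u v = Suc 2" using 2 \<open>d u v = 3\<close> by auto
          then show False using sb2_F[OF ns V(1), of y 2 z v] duy Eyv Ezv Esym dyz by blast
        qed
      qed
    qed
  qed
qed


lemma quad_L:
  assumes ns: "nsb" and tc: "\<And>h. tcl h" and exy: "E x y" and uV: "u \<in> V" and vV: "v \<in> V"
    and ux: "d u x = a" and uy: "d u y = Suc a" and vy: "d v y = b" and vx: "d v x = Suc b"
  shows "\<forall>q q'. d y q = i \<longrightarrow> d y q + d q v = b \<longrightarrow> E q q' \<longrightarrow> Suc (d q' v) = d q v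
     \<longrightarrow> d u q = Suc a + i \<longrightarrow> d u q' = Suc a + i \<longrightarrow> (\<exists>w. E w x \<and> E w y \<and> d u w = a \<and> d v w = b)"
proof (induction i)
  have xV: "x \<in> V" and yV: "y \<in> V" using exy EV1 EV2 by auto
  case 0
  show ?case
  proof (intro allI impI)
    fix q q' assume a1: "d y q = 0" and a2: "d y q + d q v = b" and a3: "E q q'"
      and a4: "Suc (d q' v) = d q v" and a5: "d u q = Suc a + 0" and a6: "d u q' = Suc a + 0"
    have qV: "q \<in> V" and q'V: "q' \<in> V" using a3 EV1 EV2 by auto
    have qy: "q = y" using a1 d0E qV yV by metis
    obtain w where w: "E w y" "E w q'" "Suc (d u w) = Suc a"
      using tc[of "Suc a"] uV a3 qy a5 a6 unfolding tcl_def by force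
    have wV: "w \<in> V" using w EV1 by blast
    have q'v: "d v q' = b - 1" "b \<ge> 1" using a2 a4 qy dsym[OF vV q'V] d0 yV by auto
    have xq': "d x q' \<ge> 2" using tri[OF vV q'V xV] vx q'v dsym[OF q'V xV] by linarith
    have wx: "d w x \<le> 2" using tr[OF wV yV xV] w d1s exy by fastforce
    consider "d w x = 0" | "d w x = 1" | "d w x = 2" using wx by linarith
    then show "\<exists>w. E w x \<and> E w y \<and> d u w = a \<and> d v w = b"
    proof cases
      case 1
      then have "w = x" using d0E wV xV by blast
      then show ?thesis using w xq' d1 by fastforce
    next
      case 2
      then have Ewx: "E w x" using d1E wV xV by blast
      have "d v w \<le> d v q' + d q' w" using tri vV q'V wV by blast
      moreover have "d v x \<le> d v w + d w x" using tri vV wV xV by blast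
      moreover have "d q' w = 1" using w d1s by blast
      ultimately have "d v w = b" using q'v vx 2 by linarith
      then show ?thesis using Ewx w by auto
    next
      case 3
      have "d u w = a" using w by simp
      then show ?thesis using sb2_F[OF ns uV ux, of w y] uy exy w Esym 3 dsym[OF wV xV] by auto
    qed
  qed
next
  have xV: "x \<in> V" and yV: "y \<in> V" using exy EV1 EV2 by auto
  case (Suc i)
  show ?case
  proof (intro allI impI)
    fix q q' assume a1: "d y q = Suc i" and a2: "d y q + d q v = b" and a3: "E q q'"
      and a4: "Suc (d q' v) = d q v" and a5: "d u q = Suc a + Suc i" and a6: "d u q' = Suc a + Suc i"
    have qV: "q \<in> V" and q'V: "q' \<in> V" using a3 EV1 EV2 by auto
    have "d q y = Suc i" using a1 dsym qV yV by metis
    then obtain q'' where q'': "E q q''" "d q'' y = i" using dstep qV yV by blast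
    have q''V: "q'' \<in> V" using q'' EV2 by blast
    have yq'': "d y q'' = i" using q'' dsym q''V yV by metis
    have uq'': "d u q'' = Suc a + i"
    proof -
      have "d u q'' \<le> d u y + d y q''" using tri uV yV q''V by blast
      moreover have "d u q \<le> d u q'' + d q'' q" using tri uV q''V qV by blast
      moreover have "d q'' q = 1" using q'' d1s by blast
      ultimately show ?thesis using a5 uy yq'' by linarith
    qed
    obtain w where w: "E w q" "E w q'" "Suc (d u w) = Suc a + Suc i"
      using tc[of "Suc a + Suc i"] uV a3 a5 a6 unfolding tcl_def by blast
    have wV: "w \<in> V" using w EV1 by blast
    have uw: "d u w = Suc a + i" using w by simp
    have q''v: "d q'' v = b - i"
    proof -
      have "d q'' v \<le> d q'' q + d q v" using tri q''V qV vV by blast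
      moreover have "d y v \<le> d y q'' + d q'' v" using tri yV q''V vV by blast
      moreover have "d y v = b" using vy dsym vV yV by metis
      ultimately show ?thesis using q'' d1s a1 a2 yq'' by fastforce
    qed
    have bge: "b \<ge> Suc (Suc i)" using a1 a2 a4 by linarith
    have q'v: "d q' v = b - Suc (Suc i)" using a1 a2 a4 by linarith
    have q''q': "d q'' q' \<ge> 2"
    proof -
      have "d q'' v \<le> d q'' q' + d q' v" using tri q''V q'V vV by blast
      then show ?thesis using q''v q'v bge by linarith
    qed
    have wq'': "d w q'' \<le> 2" using tr[OF wV qV q''V] w q'' d1s by fastforce
    consider "d w q'' = 0" | "d w q'' = 1" | "d w q'' = 2" using wq'' by linarith
    then show "\<exists>w. E w x \<and> E w y \<and> d u w = a \<and> d v w = b"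
    proof cases
      case 1
      then have "w = q''" using d0E wV q''V by blast
      then show ?thesis using w q''q' d1 by fastforce
    next
      case 3
      have "d u q = Suc (Suc a + i)" using a5 by simp
      then show ?thesis using sb2_F[OF ns uV uq'' uw, of q] q'' w Esym 3 dsym[OF wV q''V] by auto
    next
      case 2
      have Eq''w: "E q'' w" using 2 d1E wV q''V Esym by blast
      have wv: "Suc (d w v) = d q'' v"
      proof -
        have "d w v \<le> d w q' + d q' v" using tri wV q'V vV by blast
        moreover have "d q'' v \<le> d q'' w + d w v" using tri q''V wV vV by blast
        moreover have "d w q' = 1" "d q'' w = 1" using w Eq''w d1s by auto
        ultimately show ?thesis using q''v q'v bge by linarith
      qed
      have "d y q'' + d q'' v = b" using yq'' q''v bge by linarith
      then show ?thesis using Suc.IH yq'' Eq''w wv uq'' uw by blast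
    qed
  qed
qed

lemma quad_M:
  assumes ns: "nsb" and tc: "\<And>h. tcl h" and exy: "E x y" and uV: "u \<in> V" and vV: "v \<in> V"
    and ux: "d u x = a" and uy: "d u y = Suc a" and vy: "d v y = b" and vx: "d v x = Suc b"
    and uv: "d u v \<le> a + b"
  shows "\<forall>q\<in>V. d q v = r \<longrightarrow> d y q + d q v = b \<longrightarrow> d u q = Suc a + d y q \<longrightarrow> (\<exists>w. E w x \<and> E w y \<and> d u w = a \<and> d v w = b)"
proof (induction r)
  have xV: "x \<in> V" and yV: "y \<in> V" using exy EV1 EV2 by auto
  case 0
  show ?case
  proof (intro ballI impI)
    fix q assume qV: "q \<in> V" and a1: "d q v = 0" "d y q + d q v = b" "d u q = Suc a + d y q"
    then have "q = v" using a1 d0E vV by blast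
    then show "\<exists>w. E w x \<and> E w y \<and> d u w = a \<and> d v w = b" using a1 uv by simp
  qed
next
  have xV: "x \<in> V" and yV: "y \<in> V" using exy EV1 EV2 by auto
  case (Suc r)
  show ?case
  proof (intro ballI impI)
    fix q assume qV: "q \<in> V" and a1: "d q v = Suc r" and a2: "d y q + d q v = b" and a3: "d u q = Suc a + d y q"
    obtain q' where q': "E q q'" "d q' v = r" using dstep qV vV a1 by blast
    have q'V: "q' \<in> V" using q' EV2 by blast
    define i where "i = d y q"
    have yq': "d y q' = Suc i"
    proof -
      have "d y q' \<le> d y q + d q q'" using tri yV qV q'V by blast
      moreover have "d y v \<le> d y q' + d q' v" using tri yV q'V vV by blast
      moreover have "d y v = b" using vy dsym vV yV by metis
      ultimately show ?thesis using q' d1s a1 a2 i_def by fastforce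
    qed
    have uq'1: "d u q' \<le> Suc a + Suc i" using tri[OF uV qV q'V] q' d1s a3 i_def by fastforce
    have uq'2: "a + i \<le> d u q'" using tri[OF uV q'V qV] q' d1s a3 i_def by fastforce
    consider "d u q' = Suc a + Suc i" | "d u q' = Suc a + i" | "d u q' = a + i" using uq'1 uq'2 by linarith
    then show "\<exists>w. E w x \<and> E w y \<and> d u w = a \<and> d v w = b"
    proof cases
      case 1
      have "d y q' + d q' v = b" using yq' q' a1 a2 i_def by linarith
      then show ?thesis using Suc.IH q' yq' 1 q'V by auto
    next
      case 2
      have "Suc (d q' v) = d q v" using q' a1 by simp
      then show ?thesis using quad_L[OF ns tc exy uV vV ux uy vy vx, of i] a2 q'(1) a3 2 i_def by blast
    next
      case 3
      show ?thesis
      proof (cases i)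
        case 0
        then have qy: "q = y" using i_def d0E yV qV by metis
        have "d x q' \<ge> 2"
        proof -
          have "d v x \<le> d v q' + d q' x" using tri vV q'V xV by blast
          moreover have "d v q' = r" using q' dsym vV q'V by metis
          moreover have "b = Suc r" using a1 a2 qy d0 yV by simp
          ultimately show ?thesis using vx dsym[OF q'V xV] by linarith
        qed
        moreover have "d x q' \<le> 2" using tr[OF xV yV q'V] exy q' qy d1s by fastforce
        ultimately have "d x q' = 2" by linarith
        then show ?thesis using sb2_F[OF ns uV ux, of q' y] 3 0 uy exy q' qy by auto
      next
        case (Suc i')
        have "d q y = Suc i'" using i_def Suc dsym qV yV by metis
        then obtain q'' where q'': "E q q''" "d q'' y = i'" using dstep qV yV by blast
        have q''V: "q'' \<in> V" using q'' EV2 by blast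
        have yq'': "d y q'' = i'" using q'' dsym q''V yV by metis
        have uq'': "d u q'' = a + i"
        proof -
          have "d u q'' \<le> d u y + d y q''" using tri uV yV q''V by blast
          moreover have "d u q \<le> d u q'' + d q'' q" using tri uV q''V qV by blast
          moreover have "d q'' q = 1" using q'' d1s by blast
          ultimately show ?thesis using a3 uy yq'' i_def Suc by linarith
        qed
        have "d q'' q' = 2"
        proof -
          have "d q'' v \<le> d q'' q' + d q' v" using tri q''V q'V vV by blast
          moreover have "d y v \<le> d y q'' + d q'' v" using tri yV q''V vV by blast
          moreover have "d y v = b" using vy dsym vV yV by metis
          moreover have "d q'' q' \<le> 2" using tr[OF q''V qV q'V] q'' q' d1s by fastforce
          ultimately show ?thesis using q' a1 a2 i_def Suc yq'' by linarith
        qed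
        then show ?thesis using sb2_F[OF ns uV uq'' 3, of q] q'' q' a3 i_def Esym by auto
      qed
    qed
  qed
qed

lemma quad:
  assumes ns: "nsb" and tc: "\<And>h. tcl h" and exy: "E x y" and uV: "u \<in> V" and vV: "v \<in> V"
    and ux: "d u x = a" and uy: "d u y = Suc a" and vy: "d v y = b" and vx: "d v x = Suc b"
    and uv: "d u v \<le> a + b"
  shows "\<exists>w. E w x \<and> E w y \<and> d u w = a \<and> d v w = b"
proof -
  have yV: "y \<in> V" using exy EV2 by blast
  have "d y v = b" using vy dsym vV yV by metis
  then show ?thesis using quad_M[OF assms, of "d y v"] d0 yV uy by auto
qed

theorem nsb_J0: assumes ns: "nsb" and nc5: "noC5" shows "axiom_J0' V (interval V E)"
  unfolding axiom_J0'_def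
proof (intro ballI impI)
  fix u x y v assume V: "u \<in> V" "x \<in> V" "y \<in> V" "v \<in> V"
  assume dis: "distinct [u, x, y, v]" and h1: "x \<in> interval V E u y" and h2: "y \<in> interval V E x v"
    and h3: "interval V E u y \<inter> interval V E x v \<subseteq> {u, x, y, v}"
  have tc: "\<And>h. tcl h" using nsb_tcl ns nc5 by blast
  have e1: "d u x + d x y = d u y" using h1 intv by blast
  have e2: "d x y + d y v = d x v" using h2 intv by blast
  have T: "\<And>a b c. a \<in> V \<Longrightarrow> b \<in> V \<Longrightarrow> c \<in> V \<Longrightarrow> d a c \<le> d a b + d b c" using tri by blast
  have S: "\<And>a b. a \<in> V \<Longrightarrow> b \<in> V \<Longrightarrow> d a b = d b a" using dsym by blast
  have dxy: "d x y = 1"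
  proof (rule ccontr)
    assume ne1: "d x y \<noteq> 1"
    have "d x y \<noteq> 0" using d0E V dis by auto
    then obtain k where k: "d x y = Suc k" "k \<ge> 1" using ne1 by (cases "d x y") auto
    then obtain w where w: "E x w" "d w y = k" using dstep V by blast
    have wV: "w \<in> V" using w EV2 by blast
    have xw: "d x w = 1" using w d1 by blast
    have "d u w + d w y = d u y"
    proof -
      have "d u w \<le> d u x + d x w" using T V wV by blast
      moreover have "d u y \<le> d u w + d w y" using T V wV by blast
      ultimately show ?thesis using e1 xw k w by linarith
    qed
    then have wi1: "w \<in> interval V E u y" using intv wV by blast
    have "d x w + d w v = d x v"
    proof -
      have "d w v \<le> d w y + d y v" using T V wV by blast
      moreover have "d x v \<le> d x w + d w v" using T V wV by blast
      ultimately show ?thesis using e2 xw k w by linarith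
    qed
    then have wi2: "w \<in> interval V E x v" using intv wV by blast
    have "w \<noteq> x" using w Ene by blast
    moreover have "w \<noteq> y" using w k d0 V by auto
    moreover have "w \<noteq> u"
    proof
      assume "w = u" then show False using e1 w k by simp
    qed
    moreover have "w \<noteq> v"
    proof
      assume "w = v" then show False using e2 xw k by simp
    qed
    ultimately show False using wi1 wi2 h3 by blast
  qed
  have exy: "E x y" using dxy d1E V by blast
  define a where "a = d u x"
  define b where "b = d v y"
  have a1: "a \<ge> 1" using a_def d0E V dis by (metis distinct_length_2_or_more less_one not_less)
  have b1: "b \<ge> 1" using b_def d0E V dis
    by (metis distinct.simps(2) insert_iff list.simps(15) not_less less_one)
  have uy: "d u y = Suc a" using e1 dxy a_def by simp
  have vx: "d v x = Suc b" using e2 dxy b_def S V by simp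
  show "x \<in> interval V E u v"
  proof (rule ccontr)
    assume nx: "x \<notin> interval V E u v"
    have "d u x + d x v \<noteq> d u v" using nx intv V by blast
    moreover have "d u v \<le> d u x + d x v" using T V by blast
    ultimately have uv: "d u v \<le> a + b" using a_def vx S V by fastforce
    obtain w where w: "E w x" "E w y" "d u w = a" "d v w = b"
      using quad[OF ns tc exy V(1) V(4) a_def[symmetric] uy b_def[symmetric] vx uv] by blast
    have wV: "w \<in> V" using w EV1 by blast
    have "w \<in> interval V E u y" using intv wV w uy d1s by auto
    moreover have "w \<in> interval V E x v" using intv wV w vx d1s S V by auto
    moreover have "w \<noteq> u" using w a1 d0 V by auto
    moreover have "w \<noteq> v" using w b1 d0 V by auto
    moreover have "w \<noteq> x" "w \<noteq> y" using w Ene by auto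
    ultimately show False using h3 by blast
  qed
qed

end

context cg
begin

lemma far: assumes "q \<in> V" "a \<in> V" "b \<in> V" "d q a + 2 \<le> d q b"
  shows "\<not> E a b \<and> \<not> E b a \<and> a \<noteq> b \<and> 2 \<le> d a b"
proof -
  have "d q b \<le> d q a + d a b" using tri assms by blast
  then have "2 \<le> d a b" using assms by linarith
  then show ?thesis using d1s d0 assms by fastforce
qed

lemma lev_ne: "d q a \<noteq> d q b \<Longrightarrow> a \<noteq> b" by blast

lemma d2': assumes "E x y" "E y z" "x \<noteq> z" "\<not> E x z" shows "d x z = 2 \<and> d z x = 2"
  using d2[OF assms] d2[of z y x] assms Esym by blast

end

locale mc = cg V E for V :: "'a set" and E +
  fixes j m :: nat
  assumes m23: "m = 2 \<or> m = 3" and nc5: "noC5" and nsbn: "noSB (2*j+m)"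
begin

abbreviation n where "n \<equiv> 2*j+m"

definition Cfg :: "(nat \<Rightarrow> 'a) \<Rightarrow> bool" where
  "Cfg c \<longleftrightarrow> c n = c 0 \<and> (\<forall>k\<le>n. c k \<in> V) \<and> (\<forall>k<n. E (c k) (c (Suc k)))
     \<and> (\<forall>k\<le>n. d (c 0) (c k) = min k (n - k)) \<and> d (c j) (c (j+m)) = m"

definition cyc :: "nat \<Rightarrow> nat \<Rightarrow> nat" where "cyc s t = min (t - s) (n - (t - s))"

lemma tcm: "2*h+1 < n \<Longrightarrow> tcl h" using tcf[OF nc5 nsbn] by blast

lemma sbn2: assumes "q \<in> V" "d q u = k" "d q v = k" "d q z = Suc k" "E u z" "E z v" "d u v = 2"
  shows "n \<le> 2*k+2"
  using sb2_le[OF nsbn assms] .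

lemma sbn3: assumes "q \<in> V" "d q u = k" "d q v = k" "d q z1 = Suc k" "d q z2 = Suc k"
  "E u z1" "E z1 z2" "E z2 v" "d u v = 3"
  shows "n \<le> 2*k+3"
  using sb3_le[OF nsbn assms] .

context
  fixes c assumes C: "Cfg c"
begin

lemma cV: "k \<le> n \<Longrightarrow> c k \<in> V" using C unfolding Cfg_def by blast
lemma cE: "k < n \<Longrightarrow> E (c k) (c (Suc k))" using C unfolding Cfg_def by blast
lemma cL: "k \<le> n \<Longrightarrow> d (c 0) (c k) = min k (n - k)" using C unfolding Cfg_def by blast
lemma cT: "d (c j) (c (j+m)) = m" using C unfolding Cfg_def by blast
lemma cn: "c n = c 0" using C unfolding Cfg_def by blast

lemma c0V: "c 0 \<in> V" using cV by simp

lemma j1: "j \<ge> 1"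
proof (rule ccontr)
  assume "\<not> j \<ge> 1"
  then have j0: "j = 0" by simp
  then have "d (c 0) (c m) = 0" using cL[of m] by simp
  then have "c m = c 0" using d0E cV j0 by (metis c0V le_add2)
  then show False using cT j0 d0 c0V m23 by auto
qed

lemma j2: "m = 3 \<Longrightarrow> j \<ge> 2"
proof (rule ccontr)
  assume m3: "m = 3" and "\<not> j \<ge> 2"
  then have j: "j = 1" using j1 by simp
  have "d (c 0) (c 1) = 1" using cL[of 1] j m3 by simp
  moreover have "d (c 0) (c 4) = 1" using cL[of 4] j m3 by simp
  moreover have "d (c 1) (c 4) \<le> d (c 1) (c 0) + d (c 0) (c 4)" using tri cV j m3 by simp
  moreover have "d (c 1) (c 0) = d (c 0) (c 1)" using dsym cV j m3 by simp
  ultimately show False using cT j m3 by simp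
qed

lemma levA: "k \<le> j+1 \<Longrightarrow> d (c 0) (c k) = k"
  using cL[of k] m23 by auto

lemma levB: "j+m-1 \<le> k \<Longrightarrow> k \<le> n \<Longrightarrow> d (c 0) (c k) = n - k"
  using cL[of k] m23 by auto

lemma up1: "s + k \<le> n \<Longrightarrow> d (c s) (c (s+k)) \<le> k"
proof (induction k)
  case 0 then show ?case using d0 cV by simp
next
  case (Suc k)
  have "d (c s) (c (s + Suc k)) \<le> d (c s) (c (s+k)) + d (c (s+k)) (c (s + Suc k))"
    using tri cV Suc.prems by simp
  moreover have "d (c (s+k)) (c (s + Suc k)) = 1" using d1 cE Suc.prems by simp
  ultimately show ?case using Suc by simp
qed

lemma up: assumes "s \<le> t" "t \<le> n" shows "d (c s) (c t) \<le> cyc s t"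
proof -
  have a: "d (c s) (c t) \<le> t - s" using up1[of s "t-s"] assms by simp
  have "d (c s) (c t) \<le> d (c s) (c 0) + d (c 0) (c t)" using tri cV assms c0V by simp
  moreover have "d (c s) (c 0) = d (c 0) (c s)" using dsym cV assms c0V by simp
  moreover have "d (c 0) (c s) \<le> s" using cL[of s] assms by simp
  moreover have "d (c 0) (c t) \<le> n - t" using cL[of t] assms by simp
  ultimately have "d (c s) (c t) \<le> n - (t - s)" using assms by linarith
  then show ?thesis using a unfolding cyc_def by simp
qed

lemma geoA: assumes "s \<le> t" "t \<le> j+1" shows "d (c s) (c t) = t - s"
proof -
  have tn: "t \<le> n" "s \<le> n" using assms m23 by auto
  have "d (c 0) (c t) \<le> d (c 0) (c s) + d (c s) (c t)" using tri cV tn c0V by simp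
  moreover have "d (c s) (c t) \<le> t - s" using up1[of s "t-s"] assms tn by simp
  ultimately show ?thesis using levA[of s] levA[of t] assms by simp
qed

lemma geoB: assumes "j+m-1 \<le> s" "s \<le> t" "t \<le> n" shows "d (c s) (c t) = t - s"
proof -
  have "d (c 0) (c s) \<le> d (c 0) (c t) + d (c t) (c s)" using tri cV assms c0V by simp
  moreover have "d (c s) (c t) \<le> t - s" using up1[of s "t-s"] assms by simp
  moreover have "d (c t) (c s) = d (c s) (c t)" using dsym cV assms by simp
  ultimately show ?thesis using levB[of s] levB[of t] assms by simp
qed

lemma refl_cfg: "Cfg (\<lambda>k. c (n - k))"
  unfolding Cfg_def
proof (intro conjI allI impI)
  show "c (n - n) = c (n - 0)" using cn by simp
  fix k
  show "k \<le> n \<Longrightarrow> c (n - k) \<in> V" using cV by simp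
  show "k < n \<Longrightarrow> E (c (n - k)) (c (n - Suc k))"
  proof -
    assume k: "k < n"
    then have "E (c (n - Suc k)) (c (Suc (n - Suc k)))" using cE[of "n - Suc k"] by simp
    moreover have "Suc (n - Suc k) = n - k" using k by simp
    ultimately show ?thesis using Esym by simp
  qed
  show "k \<le> n \<Longrightarrow> d (c (n - 0)) (c (n - k)) = min k (n - k)"
    using cL[of "n-k"] cn by (simp add: min.commute)
next
  have "d (c (j+m)) (c j) = m" using cT dsym cV by simp
  moreover have "n - j = j + m" "n - (j+m) = j" by simp_all
  ultimately show "d (c (n - j)) (c (n - (j + m))) = m" by simp
qed

lemma repl: assumes "1 \<le> r" "r \<le> n - 1" "w \<in> V" "E (c (r-1)) w" "E w (c (r+1))"
  "d (c 0) w = min r (n - r)" "r = j \<Longrightarrow> d w (c (j+m)) = m" "r = j+m \<Longrightarrow> d (c j) w = m"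
  shows "Cfg (c(r := w))"
  unfolding Cfg_def
proof (intro conjI allI impI)
  have "r \<noteq> n" "r \<noteq> 0" using assms m23 by auto
  then show "(c(r := w)) n = (c(r := w)) 0" using cn by simp
  fix k
  show "k \<le> n \<Longrightarrow> (c(r := w)) k \<in> V" using cV assms by simp
  show "k < n \<Longrightarrow> E ((c(r := w)) k) ((c(r := w)) (Suc k))"
  proof -
    assume k: "k < n"
    consider "k = r" | "Suc k = r" | "k \<noteq> r" "Suc k \<noteq> r" by blast
    then show ?thesis
    proof cases
      case 1 then show ?thesis using assms by simp
    next
      case 2 then show ?thesis using assms by auto
    next
      case 3 then show ?thesis using cE k by simp
    qed
  qed
  show "k \<le> n \<Longrightarrow> d ((c(r := w)) 0) ((c(r := w)) k) = min k (n - k)"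
    using cL assms by simp
next
  show "d ((c(r := w)) j) ((c(r := w)) (j + m)) = m"
    using assms cT m23 by auto
qed

lemma force_lev: assumes "1 \<le> r" "r \<le> n - 1" "\<not> (j+1 \<le> r \<and> r \<le> j+m-1)" "w \<in> V"
  "E (c (r-1)) w" "E w (c (r+1))"
  shows "d (c 0) w = min r (n - r)"
proof -
  have t1: "d (c 0) w \<le> d (c 0) (c (r-1)) + d (c (r-1)) w" using tri c0V cV assms by simp
  have t2: "d (c 0) (c (r+1)) \<le> d (c 0) w + d w (c (r+1))" using tri c0V cV assms by simp
  have t3: "d (c 0) w \<le> d (c 0) (c (r+1)) + d (c (r+1)) w" using tri c0V cV assms by simp
  have t4: "d (c 0) (c (r-1)) \<le> d (c 0) w + d w (c (r-1))" using tri c0V cV assms by simp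
  have e: "d (c (r-1)) w = 1" "d w (c (r+1)) = 1" "d (c (r+1)) w = 1" "d w (c (r-1)) = 1"
    using assms d1s by auto
  show ?thesis
  proof (cases "r \<le> j")
    case True
    then have "d (c 0) (c (r-1)) = r - 1" "d (c 0) (c (r+1)) = r + 1" using levA by auto
    moreover have "min r (n - r) = r" using True by simp
    ultimately show ?thesis using t1 t2 e assms by linarith
  next
    case False
    then have r: "r \<ge> j+m" using assms by linarith
    then have "d (c 0) (c (r-1)) = n - (r - 1)" "d (c 0) (c (r+1)) = n - (r + 1)"
      using levB assms m23 by auto
    moreover have "min r (n - r) = n - r" using r by simp
    ultimately show ?thesis using t3 t4 e assms r by linarith
  qed
qed

end
end

context mc
begin

context
  fixes c assumes C: "Cfg c"
begin

lemma cE2: "k < n \<Longrightarrow> k' = Suc k \<Longrightarrow> E (c k) (c k')" using cE[OF C] by simp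

lemma W2: assumes m2: "m = 2" and jj: "j \<ge> 2"
  and w: "E w (c j)" "E w (c (j+1))" "E w (c (j+2))" "d (c 0) w = j"
  shows False
proof -
  have p: "c 0 \<in> V" using c0V[OF C] .
  have V: "c j \<in> V" "c (j+1) \<in> V" "c (j+2) \<in> V" using cV[OF C] m2 by auto
  have wV: "w \<in> V" using w EV1 by blast
  have L: "d (c 0) (c j) = j" "d (c 0) (c (j+1)) = j+1" "d (c 0) (c (j+2)) = j"
    using levA[OF C, of j] levA[OF C, of "j+1"] levB[OF C, of "j+2"] m2 by auto
  have E1: "E (c j) (c (j+1))" "E (c (j+1)) (c (j+2))" using cE[OF C] m2 by auto
  have uv: "d (c j) (c (j+2)) = 2" using cT[OF C] m2 by simp
  have tc: "tcl j" using tcm m2 by simp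
  obtain t where t: "E t (c j)" "E t w" "Suc (d (c 0) t) = j"
    using tc p w(1) L(1) w(4) Esym unfolding tcl_def by blast
  obtain t' where t': "E t' w" "E t' (c (j+2))" "Suc (d (c 0) t') = j"
    using tc p w(3) L(3) w(4) unfolding tcl_def by blast
  have tV: "t \<in> V" "t' \<in> V" using t t' EV1 by auto
  have ft: "\<not> E t (c (j+1)) \<and> \<not> E (c (j+1)) t \<and> t \<noteq> c (j+1) \<and> 2 \<le> d t (c (j+1))"
    using far[OF p tV(1) V(2)] t L by simp
  have ft': "\<not> E t' (c (j+1)) \<and> \<not> E (c (j+1)) t' \<and> t' \<noteq> c (j+1)"
    using far[OF p tV(2) V(2)] t' L by simp
  have c4: "\<And>s. E s (c j) \<Longrightarrow> E s (c (j+2)) \<Longrightarrow> \<not> E s (c (j+1)) \<Longrightarrow> s \<noteq> c (j+1) \<Longrightarrow> False"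
  proof -
    fix s assume s: "E s (c j)" "E s (c (j+2))" "\<not> E s (c (j+1))" "s \<noteq> c (j+1)"
    have sV: "s \<in> V" using s EV1 by blast
    have "d s (c (j+1)) = 2" using d2[of s "c j" "c (j+1)"] s E1 by blast
    then have "n \<le> 2*1+2" using sbn2[OF sV, of "c j" 1 "c (j+2)" "c (j+1)"] s d1 E1 uv by simp
    then show False using m2 jj by simp
  qed
  have le: "d t t' \<le> 2" using tr[OF tV(1) wV tV(2)] t t' d1s by fastforce
  consider "d t t' = 0" | "d t t' = 1" | "d t t' = 2" using le by linarith
  then show False
  proof cases
    case 1
    then have "t = t'" using d0E tV by blast
    then show False using c4[of t] t t' ft Esym by blast
  next
    case 3
    have "n \<le> 2*(j-1)+2"
      by (rule sbn2[OF p, of t "j-1" t' w]) (use t t' 3 w jj Esym in auto)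
    then show False using m2 jj by simp
  next
    case 2
    then have tt: "E t t'" using d1E tV by blast
    show False
    proof (cases "E t (c (j+2))")
      case True then show False using c4[of t] t ft Esym by blast
    next
      case f1: False
      show False
      proof (cases "E t' (c j)")
        case True then show False using c4[of t'] t' ft' Esym by blast
      next
        case f2: False
        have n1: "c j \<noteq> t'" using t' L jj by auto
        have n2: "c j \<noteq> c (j+2)" "\<not> E (c j) (c (j+2))" using uv d1 d0 V by auto
        have n3: "t \<noteq> c (j+2)" using t L jj by auto
        show False
          by (rule c5_F[OF nc5, of "c j" t t' "c (j+2)" "c (j+1)"])
             (use t t' tt E1 ft ft' f1 f2 n1 n2 n3 Esym in auto)
      qed
    qed
  qed
qed

lemma R4: assumes m3: "m = 3" and w: "E w (c (j+1))" "E w (c (j+2))" "d (c 0) w = j"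
  shows False
proof -
  have p: "c 0 \<in> V" using c0V[OF C] .
  have V: "c j \<in> V" "c (j+1) \<in> V" "c (j+2) \<in> V" "c (j+3) \<in> V" using cV[OF C] m3 by auto
  have wV: "w \<in> V" using w EV1 by blast
  have L: "d (c 0) (c j) = j" "d (c 0) (c (j+1)) = j+1" "d (c 0) (c (j+2)) = j+1" "d (c 0) (c (j+3)) = j"
    using levA[OF C, of j] levA[OF C, of "j+1"] levB[OF C, of "j+2"] levB[OF C, of "j+3"] m3 by auto
  have E1: "E (c j) (c (j+1))" "E (c (j+1)) (c (j+2))" "E (c (j+2)) (c (j+3))"
    using cE2[of j "j+1"] cE2[of "j+1" "j+2"] cE2[of "j+2" "j+3"] m3 by auto
  have uv: "d (c j) (c (j+3)) = 3" using cT[OF C] m3 by simp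
  have uz2: "d (c j) (c (j+2)) = 2"
  proof -
    have "d (c j) (c (j+3)) \<le> d (c j) (c (j+2)) + d (c (j+2)) (c (j+3))" using tri V by blast
    moreover have "d (c j) (c (j+2)) \<le> 2" using tr[OF V(1) V(2) V(3)] E1 d1s by fastforce
    ultimately show ?thesis using uv E1 d1s by fastforce
  qed
  have le: "d (c j) w \<le> 2" using tr[OF V(1) V(2) wV] E1 w d1s by fastforce
  consider "d (c j) w = 0" | "d (c j) w = 1" | "d (c j) w = 2" using le by linarith
  then show False
  proof cases
    case 1
    then have "w = c j" using d0E V wV by metis
    then show False using w uz2 d1 by simp
  next
    case 3
    have "n \<le> 2*j+2" by (rule sbn2[OF p, of "c j" j w "c (j+1)"]) (use L w 3 E1 Esym in auto)
    then show False using m3 by simp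
  next
    case 2
    have uw: "E (c j) w" using 2 d1E V wV by blast
    have wv1: "w \<noteq> c (j+3)" using uw uv d1 by auto
    have wv2: "\<not> E w (c (j+3))"
    proof
      assume "E w (c (j+3))"
      then have "d (c j) (c (j+3)) \<le> 2" using tr[OF V(1) wV V(4)] uw d1s by fastforce
      then show False using uv by simp
    qed
    have "d w (c (j+3)) = 2" using d2[of w "c (j+2)" "c (j+3)"] w E1 wv1 wv2 by blast
    then have "n \<le> 2*j+2" using sbn2[OF p, of w j "c (j+3)" "c (j+2)"] L w E1 by simp
    then show False using m3 by simp
  qed
qed

lemma V2: assumes m2: "m = 2" and jj: "j \<ge> 2" and wV: "w \<in> V"
  and w: "E w (c (j+1))" "E w (c (j+3))"
  shows "d (c j) w = 2"
proof -
  have p: "c 0 \<in> V" using c0V[OF C] .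
  have V: "c j \<in> V" "c (j+1) \<in> V" "c (j+2) \<in> V" "c (j+3) \<in> V" using cV[OF C] m2 jj by auto
  have L: "d (c 0) (c j) = j" "d (c 0) (c (j+1)) = j+1" "d (c 0) (c (j+2)) = j" "d (c 0) (c (j+3)) = j - 1"
    using levA[OF C, of j] levA[OF C, of "j+1"] levB[OF C, of "j+2"] levB[OF C, of "j+3"] m2 jj by auto
  have E1: "E (c j) (c (j+1))" "E (c (j+1)) (c (j+2))" "E (c (j+2)) (c (j+3))"
    using cE2[of j "j+1"] cE2[of "j+1" "j+2"] cE2[of "j+2" "j+3"] m2 jj by auto
  have uv: "d (c j) (c (j+2)) = 2" using cT[OF C] m2 by simp
  have bz: "d (c (j+3)) (c (j+1)) = 2"
  proof -
    have "2 \<le> d (c (j+3)) (c (j+1))" using far[OF p V(4) V(2)] L jj by simp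
    moreover have "d (c (j+3)) (c (j+1)) \<le> 2" using tr[OF V(4) V(3) V(2)] E1 d1s by fastforce
    ultimately show ?thesis by simp
  qed
  have wlev: "d (c 0) w = j"
  proof -
    have "d (c 0) w \<le> d (c 0) (c (j+3)) + d (c (j+3)) w" using tri p V wV by blast
    moreover have "d (c 0) (c (j+1)) \<le> d (c 0) w + d w (c (j+1))" using tri p V wV by blast
    ultimately show ?thesis using L w d1s jj by fastforce
  qed
  have c4: "\<And>s. E s (c (j+1)) \<Longrightarrow> E s (c (j+3)) \<Longrightarrow> d s (c (j+2)) = 2 \<Longrightarrow> False"
  proof -
    fix s assume s: "E s (c (j+1))" "E s (c (j+3))" "d s (c (j+2)) = 2"
    have "n \<le> 2*1+2" using sbn2[OF V(4), of s 1 "c (j+2)" "c (j+1)"] s bz E1 d1s Esym by auto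
    then show False using m2 jj by simp
  qed
  have le: "d (c j) w \<le> 2" using tr[OF V(1) V(2) wV] E1 w d1s by fastforce
  consider "d (c j) w = 0" | "d (c j) w = 1" | "d (c j) w = 2" using le by linarith
  then show ?thesis
  proof cases
    case 1
    then have "w = c j" using d0E V wV by metis
    then show ?thesis using c4[of "c j"] w uv by simp
  next
    case 2
    have uw: "E (c j) w" using 2 d1E V wV by blast
    show ?thesis
    proof (cases "E w (c (j+2))")
      case True
      then show ?thesis using W2[OF m2 jj] uw w wlev Esym by blast
    next
      case False
      have "w \<noteq> c (j+2)" using uw uv d1 by auto
      then have "d w (c (j+2)) = 2" using d2[of w "c (j+1)" "c (j+2)"] w E1 False by blast
      then show ?thesis using c4[of w] w by blast
    qed
  qed simp
qed

lemma V3: assumes m3: "m = 3" and wV: "w \<in> V"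
  and w: "E w (c (j+2))" "d (c 0) w = j"
  shows "d (c j) w = 3"
proof -
  have jj: "j \<ge> 2" using j2[OF C] m3 by blast
  have p: "c 0 \<in> V" using c0V[OF C] .
  have V: "c j \<in> V" "c (j+1) \<in> V" "c (j+2) \<in> V" "c (j+3) \<in> V" using cV[OF C] m3 by auto
  have L: "d (c 0) (c j) = j" "d (c 0) (c (j+1)) = j+1" "d (c 0) (c (j+2)) = j+1"
    using levA[OF C, of j] levA[OF C, of "j+1"] levB[OF C, of "j+2"] m3 by auto
  have E1: "E (c j) (c (j+1))" "E (c (j+1)) (c (j+2))" "E (c (j+2)) (c (j+3))"
    using cE2[of j "j+1"] cE2[of "j+1" "j+2"] cE2[of "j+2" "j+3"] m3 by auto
  have uv: "d (c j) (c (j+3)) = 3" using cT[OF C] m3 by simp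
  have uz2: "d (c j) (c (j+2)) = 2"
  proof -
    have "d (c j) (c (j+3)) \<le> d (c j) (c (j+2)) + d (c (j+2)) (c (j+3))" using tri V by blast
    moreover have "d (c j) (c (j+2)) \<le> 2" using tr[OF V(1) V(2) V(3)] E1 d1s by fastforce
    ultimately show ?thesis using uv E1 d1s by fastforce
  qed
  have nz1: "\<not> E w (c (j+1))" using R4[OF m3] w by blast
  have wz1: "w \<noteq> c (j+1)" using w L by auto
  have dz1w: "d (c (j+1)) w = 2" using d2[of "c (j+1)" "c (j+2)" w] E1 w nz1 wz1 Esym by metis
  have le: "d (c j) w \<le> 3" using tr[OF V(1) V(3) wV] uz2 w d1s by fastforce
  consider "d (c j) w = 0" | "d (c j) w = 1" | "d (c j) w = 2" | "d (c j) w = 3" using le by linarith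
  then show ?thesis
  proof cases
    case 1
    then have "w = c j" using d0E V wV by metis
    then show ?thesis using w uz2 d1 by simp
  next
    case 2
    have "E (c j) w" using 2 d1E V wV by blast
    then have "n \<le> 2*1+2" using sbn2[OF V(1), of "c (j+1)" 1 w "c (j+2)"] E1 uz2 w d1s dz1w Esym by auto
    then show ?thesis using m3 jj by simp
  next
    case 3
    obtain c0 where c0: "E (c j) c0" "E c0 w" using d2E[OF V(1) wV 3] by blast
    have c0V: "c0 \<in> V" using c0 EV2 by blast
    have lv: "d (c 0) c0 \<le> j+1" using tr[OF p V(1) c0V] L c0 d1s by fastforce
    show ?thesis
    proof (cases "d (c 0) c0 = j+1")
      case True
      have "n \<le> 2*j+2" using sbn2[OF p, of "c j" j w c0] L w True c0 3 by simp
      then show ?thesis using m3 by simp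
    next
      case False
      have ne1: "c0 \<noteq> c (j+1)" "c0 \<noteq> c (j+2)" using False L by auto
      have c0l: "d (c 0) c0 \<ge> j - 1" using tr[OF p c0V V(1)] L c0 d1s by fastforce
      show ?thesis
      proof (cases "E c0 (c (j+1))")
        case T1: True
        show ?thesis
        proof (cases "E c0 (c (j+2))")
          case True
          have "d (c 0) c0 = j" using T1 L False tr[OF p c0V V(2)] d1s lv by fastforce
          then show ?thesis using R4[OF m3, of c0] T1 True Esym by blast
        next
          case F2: False
          have "d c0 (c (j+2)) = 2" using d2[of c0 "c (j+1)" "c (j+2)"] T1 E1 F2 ne1 by blast
          then have "n \<le> 2*1+2" using sbn2[OF c0V, of "c (j+1)" 1 w "c (j+2)"] T1 c0 E1 w dz1w d1s Esym by auto
          then show ?thesis using m3 jj by simp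
        qed
      next
        case F1: False
        show ?thesis
        proof (cases "E c0 (c (j+2))")
          case True
          have "d (c (j+1)) c0 = 2" using d2[of "c (j+1)" "c (j+2)" c0] True E1 F1 ne1 Esym by metis
          then have "n \<le> 2*1+2" using sbn2[OF V(1), of "c (j+1)" 1 c0 "c (j+2)"] c0 E1 True uz2 d1s Esym by auto
          then show ?thesis using m3 jj by simp
        next
          case F2: False
          have a1: "c j \<noteq> c (j+2) \<and> \<not> E (c j) (c (j+2))" using uz2 d1 d0 V by auto
          have a2: "c j \<noteq> w \<and> \<not> E (c j) w" using 3 d1 d0 V by auto
          have False
            by (rule c5_F[OF nc5, of "c j" "c (j+1)" "c (j+2)" w c0])
               (use a1 a2 c0 E1 w nz1 wz1 F1 F2 ne1 Esym in auto)
          then show ?thesis ..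
        qed
      qed
    qed
  qed
qed

lemma chord: assumes n5: "5 \<le> n" shows "d (c 1) (c (n-1)) = 2"
proof -
  have p: "c 0 \<in> V" using c0V[OF C] .
  have jj: "j \<ge> 2" using n5 m23 j2[OF C] by auto
  have a1V: "c 1 \<in> V" and b1V: "c (n-1) \<in> V" using cV[OF C, of 1] cV[OF C, of "n-1"] m23 by auto
  have la: "d (c 0) (c 1) = 1" using levA[OF C, of 1] by simp
  have lb: "d (c 0) (c (n-1)) = 1" using levB[OF C, of "n-1"] jj m23 by auto
  have le: "d (c 1) (c (n-1)) \<le> 2"
    using tr[OF a1V p b1V] la lb by fastforce
  have V: "c j \<in> V" "c (j+1) \<in> V" "c (j+2) \<in> V" "c (j+m) \<in> V" using cV[OF C] m23 by auto
  have au: "d (c 1) (c j) = j - 1" using geoA[OF C, of 1 j] jj by simp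
  have bv: "d (c (n-1)) (c (j+m)) = j - 1"
  proof -
    have "d (c (j+m)) (c (n-1)) = j - 1" using geoB[OF C, of "j+m" "n-1"] jj m23 by auto
    then show ?thesis using dsym V b1V by metis
  qed
  have az: "d (c 1) (c (j+1)) = j" using geoA[OF C, of 1 "j+1"] jj by simp
  have E1: "E (c j) (c (j+1))" "E (c (j+1)) (c (j+2))" using cE[OF C] m23 by auto
  have L: "d (c 0) (c j) = j" "d (c 0) (c (j+1)) = j+1" "d (c 0) (c (j+m)) = j"
    using levA[OF C, of j] levA[OF C, of "j+1"] levB[OF C, of "j+m"] m23 by auto
  have tca: "tcl j" using tcm m23 by auto
  show ?thesis
  proof (rule ccontr)
    assume ne: "d (c 1) (c (n-1)) \<noteq> 2"
    then have le1: "d (c 1) (c (n-1)) \<le> 1" using le by linarith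
    have av: "d (c 1) (c (j+m)) \<le> j"
      using tri[OF a1V b1V V(4)] le1 bv jj by linarith
    have av2: "d (c 1) (c (j+m)) \<ge> j - 1"
      using tri[OF p a1V V(4)] la L by linarith
    show False
    proof (cases "m = 2")
      case m2: True
      have E2: "E (c (j+1)) (c (j+2))" using E1 by simp
      have uv: "d (c j) (c (j+2)) = 2" using cT[OF C] m2 by simp
      show False
      proof (cases "d (c 1) (c (j+m)) = j - 1")
        case True
        have "n \<le> 2*(j-1)+2" using sbn2[OF a1V au, of "c (j+2)" "c (j+1)"] True m2 az E1 uv jj by simp
        then show False using m2 jj by simp
      next
        case False
        then have av3: "d (c 1) (c (j+2)) = j" using av av2 m2 by simp
        obtain w where w: "E w (c (j+1))" "E w (c (j+2))" "Suc (d (c 1) w) = j"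
          using tca a1V E2 az av3 unfolding tcl_def by blast
        have wV: "w \<in> V" using w EV1 by blast
        have lew: "d (c j) w \<le> 2" using tr[OF V(1) V(2) wV] E1 w d1s by fastforce
        consider "d (c j) w = 0" | "d (c j) w = 1" | "d (c j) w = 2" using lew by linarith
        then show False
        proof cases
          case 1
          then have "w = c j" using d0E V wV by metis
          then show False using w uv d1 by simp
        next
          case 3
          have "n \<le> 2*(j-1)+2"
            by (rule sbn2[OF a1V au, of w "c (j+1)"]) (use w az 3 E1 jj Esym in auto)
          then show False using m2 jj by simp
        next
          case 2
          have uw: "E w (c j)" using 2 d1E V wV Esym by blast
          have "d (c 0) w \<le> d (c 0) (c 1) + d (c 1) w" using tri p a1V wV by blast
          moreover have "d (c 0) (c (j+1)) \<le> d (c 0) w + d w (c (j+1))" using tri p wV V by blast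
          ultimately have "d (c 0) w = j" using la w L d1s jj by fastforce
          then show False using W2[OF m2 jj, of w] uw w by blast
        qed
      qed
    next
      case False
      then have m3: "m = 3" using m23 by simp
      have V3': "c (j+3) \<in> V" using V m3 by simp
      have E3: "E (c (j+2)) (c (j+3))" using cE2[of "j+2" "j+3"] m3 by simp
      have az2: "d (c 1) (c (j+2)) \<ge> j" using tr[OF p a1V V(3)] la levB[OF C, of "j+2"] m3 by fastforce
      have az2': "d (c 1) (c (j+2)) \<le> j+1" using tr[OF a1V V(2) V(3)] az E1 d1s by fastforce
      show False
      proof (cases "d (c 1) (c (j+2)) = j")
        case True
        obtain w where w: "E w (c (j+1))" "E w (c (j+2))" "Suc (d (c 1) w) = j"
          using tca a1V E1(2) az True unfolding tcl_def by blast
        have wV: "w \<in> V" using w EV1 by blast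
        have "d (c 0) w \<le> d (c 0) (c 1) + d (c 1) w" using tri p a1V wV by blast
        moreover have "d (c 0) (c (j+1)) \<le> d (c 0) w + d w (c (j+1))" using tri p wV V by blast
        ultimately have "d (c 0) w = j" using la w L d1s jj by fastforce
        then show False using R4[OF m3, of w] w by blast
      next
        case False
        then have z2: "d (c 1) (c (j+2)) = Suc j" using az2 az2' by simp
        have v: "d (c 1) (c (j+3)) = j"
        proof -
          have "d (c 1) (c (j+2)) \<le> d (c 1) (c (j+3)) + d (c (j+3)) (c (j+2))" using tri a1V V3' V by blast
          then show ?thesis using z2 av m3 E3 d1s by fastforce
        qed
        have zv: "d (c (j+1)) (c (j+3)) = 2"
        proof -
          have "d (c j) (c (j+3)) \<le> d (c j) (c (j+1)) + d (c (j+1)) (c (j+3))" using tri V V3' by blast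
          moreover have "d (c (j+1)) (c (j+3)) \<le> 2" using tr[OF V(2) V(3) V3'] E1 E3 d1s by fastforce
          ultimately show ?thesis using cT[OF C] m3 E1 d1s by fastforce
        qed
        have "n \<le> 2*j+2" using sbn2[OF a1V az v z2 E1(2) E3 zv] .
        then show False using m3 by simp
      qed
    qed
  qed
qed

end
end

context mc
begin

context
  fixes c assumes C: "Cfg c"
begin

lemma top_step:
  assumes IH: "\<forall>c' s' t'. Cfg c' \<longrightarrow> s' \<le> t' \<longrightarrow> t' \<le> n \<longrightarrow> cyc s' t' < t - s \<longrightarrow> d (c' s') (c' t') = cyc s' t'"
  and s1: "1 \<le> s" and st: "s + 3 \<le> t" and tn: "t \<le> n - 1" and half: "2*(t-s) \<le> n" and tj: "j+2 \<le> t"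
  and nti: "\<not> (j+1 \<le> t-1 \<and> t-1 \<le> j+m-1)"
  shows "t - s \<le> d (c s) (c t)"
proof (rule ccontr)
  assume neg: "\<not> t - s \<le> d (c s) (c t)"
  define L where "L = t - s"
  have L3: "L \<ge> 3" using st L_def by simp
  have n6: "n \<ge> 6" using half L3 L_def by simp
  have cy1: "cyc s (t-1) = L - 1" using half L_def st unfolding cyc_def by simp
  have cy2: "cyc s (t-2) = L - 2" using half L_def st unfolding cyc_def by simp
  have cy3: "cyc (t-2) t = 2" using n6 st unfolding cyc_def by simp
  have AQ: "d (c s) (c (t-1)) = L - 1" using IH C cy1 st tn L_def L3 by fastforce
  have AP: "d (c s) (c (t-2)) = L - 2" using IH C cy2 st tn L_def L3 by fastforce
  have PR: "d (c (t-2)) (c t) = 2" using IH C cy3 st tn L_def L3 by fastforce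
  have AQ': "d (c s) (c (t-1)) = Suc (L-2)" using AQ L3 by simp
  have V: "c s \<in> V" "c (t-2) \<in> V" "c (t-1) \<in> V" "c t \<in> V" using cV[OF C] st tn by auto
  have EPQ: "E (c (t-2)) (c (t-1))"
  proof -
    have "t-2 < n" "t - 1 = Suc (t-2)" using st tn by auto
    then show ?thesis using cE2[OF C] by blast
  qed
  have EQR: "E (c (t-1)) (c t)" using cE2[OF C, of "t-1" t] st tn by auto
  have ge: "L - 2 \<le> d (c s) (c t)"
  proof -
    have "d (c s) (c (t-1)) \<le> d (c s) (c t) + d (c t) (c (t-1))" using tri V by blast
    moreover have "d (c t) (c (t-1)) = 1" using EQR d1s by blast
    ultimately show ?thesis using AQ by linarith
  qed
  consider "d (c s) (c t) = L - 2" | "d (c s) (c t) = L - 1" using ge neg L_def by linarith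
  then show False
  proof cases
    case 1
    have "n \<le> 2*(L-2)+2" using sbn2[OF V(1) AP 1 AQ' EPQ EQR PR] .
    then show False using half L_def L3 by simp
  next
    case 2
    have tc: "tcl (L-1)" using tcm half L_def L3 by simp
    obtain w where w: "E w (c (t-1))" "E w (c t)" "Suc (d (c s) w) = L - 1"
      using tc V(1) EQR AQ 2 unfolding tcl_def by blast
    have wV: "w \<in> V" using w EV1 by blast
    have Aw: "d (c s) w = L - 2" using w by simp
    have le: "d w (c (t-2)) \<le> 2" using tr[OF wV V(3) V(2)] w EPQ d1s by fastforce
    consider "d w (c (t-2)) = 0" | "d w (c (t-2)) = 1" | "d w (c (t-2)) = 2" using le by linarith
    then show False
    proof cases
      case 1
      then have "w = c (t-2)" using d0E wV V by blast
      then show False using w PR d1 by simp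
    next
      case 3
      have "n \<le> 2*(L-2)+2"
        by (rule sbn2[OF V(1) Aw AP AQ']) (use w EPQ 3 Esym in auto)
      then show False using half L_def L3 by simp
    next
      case 2
      have Pw: "E (c (t-2)) w" using 2 d1E wV V Esym by blast
      define r where "r = t - 1"
      have r1: "1 \<le> r" "r \<le> n - 1" using r_def st tn by auto
      have rm: "c (r-1) = c (t-2)" "c (r+1) = c t" using r_def st by (auto simp: numeral_2_eq_2)
      have lev: "d (c 0) w = min r (n - r)"
        using force_lev[OF C r1 _ wV] nti r_def rm Pw w by auto
      have cond2: "r = j+m \<Longrightarrow> d (c j) w = m"
      proof -
        assume rj: "r = j+m"
        show "d (c j) w = m"
        proof (cases "m = 2")
          case True
          have "j \<ge> 2" using n6 True by simp
          moreover have "t - 2 = j+1" "t = j+3" using rj r_def True st by auto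
          then have "c (j+1) = c (t-2)" "c (j+3) = c t" by simp_all
          ultimately show ?thesis using V2[OF C True _ wV] Pw w Esym True by auto
        next
          case False
          then have m3: "m = 3" using m23 by simp
          have "t - 2 = j+2" using rj r_def m3 st by auto
          then have "c (j+2) = c (t-2)" by simp
          moreover have "d (c 0) w = j" using lev rj m3 by simp
          ultimately show ?thesis using V3[OF C m3 wV] Pw Esym m3 by auto
        qed
      qed
      have C': "Cfg (c(r := w))"
        using repl[OF C r1 wV] rm Pw w lev cond2 r_def tj by auto
      have h: "cyc s r < t - s" using cy1 r_def L_def L3 by simp
      have "s \<le> r" "r \<le> n" using r_def st tn by auto
      then have "d ((c(r := w)) s) ((c(r := w)) r) = cyc s r"
        using IH C' h by blast
      moreover have "s \<noteq> r" using r_def st by simp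
      ultimately show False using Aw cy1 r_def st L3 by simp
    qed
  qed
qed

lemma bottom_step:
  assumes IH: "\<forall>c' s' t'. Cfg c' \<longrightarrow> s' \<le> t' \<longrightarrow> t' \<le> n \<longrightarrow> cyc s' t' < n - (t - s) \<longrightarrow> d (c' s') (c' t') = cyc s' t'"
  and s2: "2 \<le> s" and st: "s < t" and tn: "t \<le> n - 1" and bot: "n < 2*(t-s)" and L3: "3 \<le> n - (t - s)"
  shows "n - (t - s) \<le> d (c s) (c t)"
proof (rule ccontr)
  assume neg: "\<not> n - (t - s) \<le> d (c s) (c t)"
  define L where "L = n - (t - s)"
  have n6: "n \<ge> 6" using bot L3 by simp
  have sj: "s \<le> j" using bot tn L3 m23 by linarith
  have cy1: "cyc (s-1) t = L - 1" using bot L_def st s2 tn unfolding cyc_def by simp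
  have cy2: "cyc (s-2) t = L - 2" using bot L_def st s2 tn unfolding cyc_def by simp
  have cy3: "cyc (s-2) s = 2" using n6 s2 unfolding cyc_def by simp
  have V: "c t \<in> V" "c (s-2) \<in> V" "c (s-1) \<in> V" "c s \<in> V" using cV[OF C] st tn by auto
  have AQ: "d (c t) (c (s-1)) = L - 1"
  proof -
    have "d (c (s-1)) (c t) = L - 1" using IH C cy1 st tn L_def L3 by fastforce
    then show ?thesis using dsym V by metis
  qed
  have AP: "d (c t) (c (s-2)) = L - 2"
  proof -
    have "d (c (s-2)) (c t) = L - 2" using IH C cy2 st tn L_def L3 by fastforce
    then show ?thesis using dsym V by metis
  qed
  have PR: "d (c (s-2)) (c s) = 2" using IH C cy3 st tn L_def L3 by fastforce
  have AQ': "d (c t) (c (s-1)) = Suc (L-2)" using AQ L3 L_def by arith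
  have EPQ: "E (c (s-2)) (c (s-1))"
  proof -
    have "s-2 < n" "s - 1 = Suc (s-2)" using s2 st tn by auto
    then show ?thesis using cE2[OF C] by blast
  qed
  have EQR: "E (c (s-1)) (c s)" using cE2[OF C, of "s-1" s] s2 st tn by auto
  have ds: "d (c s) (c t) = d (c t) (c s)" using dsym V by metis
  have ge: "L - 2 \<le> d (c t) (c s)"
  proof -
    have "d (c t) (c (s-1)) \<le> d (c t) (c s) + d (c s) (c (s-1))" using tri V by blast
    moreover have "d (c s) (c (s-1)) = 1" using EQR d1s by blast
    ultimately show ?thesis using AQ by linarith
  qed
  consider "d (c t) (c s) = L - 2" | "d (c t) (c s) = L - 1" using ge neg L_def ds by linarith
  then show False
  proof cases
    case 1
    have "n \<le> 2*(L-2)+2" using sbn2[OF V(1) AP 1 AQ' EPQ EQR PR] .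
    then show False using bot L_def L3 by simp
  next
    case 2
    have tc: "tcl (L-1)" using tcm bot L_def L3 by simp
    obtain w where w: "E w (c (s-1))" "E w (c s)" "Suc (d (c t) w) = L - 1"
      using tc V(1) EQR AQ 2 unfolding tcl_def by blast
    have wV: "w \<in> V" using w EV1 by blast
    have Aw: "d (c t) w = L - 2" using w by simp
    have le: "d w (c (s-2)) \<le> 2" using tr[OF wV V(3) V(2)] w EPQ d1s by fastforce
    consider "d w (c (s-2)) = 0" | "d w (c (s-2)) = 1" | "d w (c (s-2)) = 2" using le by linarith
    then show False
    proof cases
      case 1
      then have "w = c (s-2)" using d0E wV V by blast
      then show False using w PR d1 by simp
    next
      case 3
      have "n \<le> 2*(L-2)+2"
        by (rule sbn2[OF V(1) Aw AP AQ']) (use w EPQ 3 Esym in auto)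
      then show False using bot L_def L3 by simp
    next
      case 2
      have Pw: "E (c (s-2)) w" using 2 d1E wV V Esym by blast
      define r where "r = s - 1"
      have r1: "1 \<le> r" "r \<le> n - 1" using r_def s2 st tn by auto
      have rm: "c (r-1) = c (s-2)" "c (r+1) = c s" using r_def s2 by (auto simp: numeral_2_eq_2)
      have nti: "\<not> (j+1 \<le> r \<and> r \<le> j+m-1)" using r_def sj by simp
      have lev: "d (c 0) w = min r (n - r)"
        using force_lev[OF C r1 nti wV] rm Pw w by auto
      have nj: "r \<noteq> j" "r \<noteq> j+m" using r_def sj s2 by auto
      have C': "Cfg (c(r := w))"
      proof (rule repl[OF C r1 wV])
        show "E (c (r-1)) w" using rm Pw by simp
        show "E w (c (r+1))" using rm w by simp
        show "d (c 0) w = min r (n-r)" using lev .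
        show "r = j \<Longrightarrow> d w (c (j + m)) = m" using nj by simp
        show "r = j+m \<Longrightarrow> d (c j) w = m" using nj by simp
      qed
      have h: "cyc r t < n - (t - s)" using cy1 r_def L_def L3 by arith
      have "r \<le> t" "t \<le> n" using r_def st tn by auto
      then have "d ((c(r := w)) r) ((c(r := w)) t) = cyc r t"
        using IH C' h by blast
      moreover have "t \<noteq> r" using r_def st by simp
      moreover have "d w (c t) = d (c t) w" using dsym wV V by metis
      ultimately show False using Aw cy1 r_def st L3 L_def by simp
    qed
  qed
qed

end

lemma CL_ind: "\<forall>c s t. Cfg c \<longrightarrow> s \<le> t \<longrightarrow> t \<le> n \<longrightarrow> cyc s t = L \<longrightarrow> d (c s) (c t) = L"
proof (induction L rule: less_induct)
  case (less L)
  have IH: "\<forall>c' s' t'. Cfg c' \<longrightarrow> s' \<le> t' \<longrightarrow> t' \<le> n \<longrightarrow> cyc s' t' < L \<longrightarrow> d (c' s') (c' t') = cyc s' t'"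
    using less by blast
  show ?case
  proof (intro allI impI)
    fix c s t assume C: "Cfg c" and st: "s \<le> t" and tn: "t \<le> n" and cy: "cyc s t = L"
    have upb: "d (c s) (c t) \<le> L" using up[OF C st tn] cy by simp
    have V: "c s \<in> V" "c t \<in> V" using cV[OF C] st tn by auto
    have lo: "L \<le> d (c s) (c t)"
    proof -
      consider "s = t" | "s = 0" | "t = n" | "t \<le> j+1" | "j+m-1 \<le> s"
        | "s \<noteq> t" "1 \<le> s" "t \<le> n - 1" "j+2 \<le> t" "s \<le> j+m-2" using st tn by linarith
      then show ?thesis
      proof cases
        case 1 then show ?thesis using cy unfolding cyc_def by simp
      next
        case 2 then show ?thesis using cL[OF C, of t] tn cy unfolding cyc_def by simp
      next
        case 3
        have "d (c s) (c n) = d (c 0) (c s)" using cn[OF C] dsym V c0V[OF C] 3 by metis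
        then show ?thesis using cL[OF C, of s] st 3 cy unfolding cyc_def by (simp add: min.commute)
      next
        case 4 then show ?thesis using geoA[OF C st 4] cy unfolding cyc_def by simp
      next
        case 5 then show ?thesis using geoB[OF C 5 st tn] cy unfolding cyc_def by simp
      next
        case 6
        show ?thesis
        proof (cases "2*(t-s) \<le> n")
          case half: True
          then have Ldef: "L = t - s" using cy unfolding cyc_def by simp
          show ?thesis
          proof (cases "t - s \<le> 2 \<or> (m = 3 \<and> s = j \<and> t = j+3)")
            case True
            show ?thesis
            proof (cases "t = Suc s")
              case True
              have "E (c s) (c t)" using cE[OF C, of s] True tn by simp
              then show ?thesis using d1 Ldef True by simp
            next
              case ts: False
              show ?thesis
              proof (cases "m = 2")
                case m2: True
                then have "s = j" "t = j+2" using 6 True ts st by auto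
                then show ?thesis using cT[OF C] m2 Ldef by simp
              next
                case False
                then have m3: "m = 3" using m23 by simp
                have Vt: "c j \<in> V" "c (j+1) \<in> V" "c (j+2) \<in> V" "c (j+3) \<in> V" using cV[OF C] m3 by auto
                have e2: "d (c (j+2)) (c (j+3)) = 1" using cE[OF C, of "j+2"] d1 m3 by (simp add: numeral_3_eq_3)
                have e1: "d (c j) (c (j+1)) = 1" using cE[OF C, of "j"] d1 m3 by simp
                consider "s = j" "t = j+2" | "s = j+1" "t = j+3" | "s = j" "t = j+3"
                  using 6 True ts st m3 by linarith
                then show ?thesis
                proof cases
                  case 1
                  have "d (c j) (c (j+3)) \<le> d (c j) (c (j+2)) + d (c (j+2)) (c (j+3))" using tri Vt by blast
                  then show ?thesis using cT[OF C] m3 e2 1 Ldef by simp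
                next
                  case 2
                  have "d (c j) (c (j+3)) \<le> d (c j) (c (j+1)) + d (c (j+1)) (c (j+3))" using tri Vt by blast
                  then show ?thesis using cT[OF C] m3 e1 2 Ldef by simp
                next
                  case 3
                  then show ?thesis using cT[OF C] m3 Ldef by simp
                qed
              qed
            qed
          next
            case False
            then have st3: "s + 3 \<le> t" using 6 by linarith
            have IH': "\<forall>c' s' t'. Cfg c' \<longrightarrow> s' \<le> t' \<longrightarrow> t' \<le> n \<longrightarrow> cyc s' t' < t - s \<longrightarrow> d (c' s') (c' t') = cyc s' t'"
              using IH Ldef by simp
            show ?thesis
            proof (cases "j+1 \<le> t-1 \<and> t-1 \<le> j+m-1")
              case False
              then show ?thesis using top_step[OF C IH'] 6 st3 half Ldef by simp
            next
              case True
              have CR: "Cfg (\<lambda>k. c (n - k))" using refl_cfg[OF C] .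
              have nti: "\<not> (j+1 \<le> (n-s)-1 \<and> (n-s)-1 \<le> j+m-1)"
                using True False m23 st3 6 by auto
              have IH'': "\<forall>c' s' t'. Cfg c' \<longrightarrow> s' \<le> t' \<longrightarrow> t' \<le> n \<longrightarrow> cyc s' t' < (n-s) - (n-t) \<longrightarrow> d (c' s') (c' t') = cyc s' t'"
                using IH' st tn by simp
              have "(n-s) - (n-t) \<le> d (c (n - (n-t))) (c (n - (n-s)))"
                using top_step[OF CR IH''] 6 st3 half st tn nti m23 by auto
              moreover have "d (c t) (c s) = d (c s) (c t)" using dsym V by metis
              ultimately show ?thesis using Ldef st tn by simp
            qed
          qed
        next
          case bot: False
          then have Ldef: "L = n - (t - s)" using cy unfolding cyc_def by simp
          have L2: "L \<ge> 2" using Ldef 6 by linarith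
          show ?thesis
          proof (cases "L = 2")
            case True
            then have "s = 1" "t = n - 1" using Ldef 6 by linarith+
            moreover have "5 \<le> n" using True Ldef bot by linarith
            ultimately show ?thesis using chord[OF C] True by simp
          next
            case False
            then have L3: "3 \<le> n - (t - s)" using L2 Ldef by simp
            have IH': "\<forall>c' s' t'. Cfg c' \<longrightarrow> s' \<le> t' \<longrightarrow> t' \<le> n \<longrightarrow> cyc s' t' < n - (t - s) \<longrightarrow> d (c' s') (c' t') = cyc s' t'"
              using IH Ldef by simp
            show ?thesis
            proof (cases "2 \<le> s")
              case True
              then show ?thesis using bottom_step[OF C IH' True] 6 bot L3 Ldef st by simp
            next
              case False
              then have s1: "s = 1" using 6 by simp
              have CR: "Cfg (\<lambda>k. c (n - k))" using refl_cfg[OF C] .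
              have IH'': "\<forall>c' s' t'. Cfg c' \<longrightarrow> s' \<le> t' \<longrightarrow> t' \<le> n \<longrightarrow> cyc s' t' < n - ((n-s) - (n-t)) \<longrightarrow> d (c' s') (c' t') = cyc s' t'"
                using IH' st tn by simp
              have "n - ((n-s) - (n-t)) \<le> d (c (n - (n-t))) (c (n - (n-s)))"
                using bottom_step[OF CR IH''] 6 bot L3 s1 st tn by auto
              moreover have "d (c t) (c s) = d (c s) (c t)" using dsym V by metis
              ultimately show ?thesis using Ldef st tn by simp
            qed
          qed
        qed
      qed
    qed
    show "d (c s) (c t) = L" using upb lo by simp
  qed
qed

lemma CL: "Cfg c \<Longrightarrow> s \<le> t \<Longrightarrow> t \<le> n \<Longrightarrow> d (c s) (c t) = cyc s t"
  using CL_ind by blast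

lemma cfg_iso: assumes C: "Cfg c" shows "isometric_cycle V E (map c [0..<n])"
  unfolding isometric_cycle_def
proof (intro conjI allI impI)
  have j: "j \<ge> 1" using j1[OF C] .
  show "3 \<le> length (map c [0..<n])" using j m23 by auto
  show "set (map c [0..<n]) \<subseteq> V" using cV[OF C] by auto
  show "distinct (map c [0..<n])"
    unfolding distinct_conv_nth
  proof (intro allI impI)
    fix i k assume i: "i < length (map c [0..<n])" and k: "k < length (map c [0..<n])" and ik: "i \<noteq> k"
    have key: "\<And>a b. a < b \<Longrightarrow> b < n \<Longrightarrow> c a \<noteq> c b"
    proof
      fix a b assume ab: "a < b" "b < n" "c a = c b"
      have "d (c a) (c b) = cyc a b" using CL[OF C, of a b] ab by simp
      moreover have "cyc a b \<ge> 1"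
      proof -
        have "b - a \<ge> 1" "n - (b - a) \<ge> 1" using ab by arith+
        then show ?thesis unfolding cyc_def by simp
      qed
      ultimately show False using ab d0 cV[OF C, of b] by simp
    qed
    show "map c [0..<n] ! i \<noteq> map c [0..<n] ! k"
      using i k ik key[of i k] key[of k i] by (cases "i < k") auto
  qed
  fix i assume i: "i < length (map c [0..<n])"
  show "E (map c [0..<n] ! i) (map c [0..<n] ! (Suc i mod length (map c [0..<n])))"
  proof (cases "Suc i < n")
    case True then show ?thesis using cE[OF C, of i] i by simp
  next
    case False
    then have "Suc i = n" using i by simp
    moreover have "0 < n" using m23 by auto
    ultimately show ?thesis using cE[OF C, of i] cn[OF C] i by simp
  qed
next
  fix i k assume i: "i < length (map c [0..<n])" and k: "k < length (map c [0..<n])"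
  have mi: "map c [0..<n] ! i = c i" "map c [0..<n] ! k = c k" "length (map c [0..<n]) = n" using i k by auto
  show "d (map c [0..<n] ! i) (map c [0..<n] ! k) =
         min (nat \<bar>int i - int k\<bar>) (length (map c [0..<n]) - nat \<bar>int i - int k\<bar>)"
  proof (cases "i \<le> k")
    case True
    have e: "nat \<bar>int i - int k\<bar> = k - i" using True by simp
    show ?thesis unfolding mi e using CL[OF C, of i k] i k True unfolding cyc_def mi by simp
  next
    case False
    have e: "nat \<bar>int i - int k\<bar> = i - k" using False by simp
    have "d (c i) (c k) = d (c k) (c i)" using dsym cV[OF C] i k by simp
    then show ?thesis unfolding mi e using CL[OF C, of k i] i k False unfolding cyc_def mi by simp
  qed
qed

end

context mc
begin

lemma mk_cfg: assumes sb: "SBump q j m T" shows "\<exists>c. Cfg c"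
proof -
  have qV: "q \<in> V" and TV: "\<And>i. i \<le> m \<Longrightarrow> T i \<in> V" and TE: "\<And>i. i < m \<Longrightarrow> E (T i) (T (Suc i))"
    and T0: "d q (T 0) = j" and Tm: "d q (T m) = j" and Tmid: "\<And>i. 0 < i \<Longrightarrow> i < m \<Longrightarrow> d q (T i) = Suc j"
    and TT: "d (T 0) (T m) = m"
    using sb unfolding SBump_def by auto
  have j1: "j \<ge> 1"
  proof (rule ccontr)
    assume "\<not> j \<ge> 1"
    then have j0: "j = 0" by simp
    have "T 0 \<in> V" "T m \<in> V" using TV[of 0] TV[of m] by auto
    then have "T 0 = q" "T m = q" using T0 Tm d0E[OF qV] j0 by (metis d0E qV)+
    then show False using TT d0 qV m23 by auto
  qed
  obtain f where f: "f 0 = q" "f j = T 0" "\<forall>i<j. E (f i) (f (Suc i))" "\<forall>i\<le>j. f i \<in> V \<and> d q (f i) = i"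
    using geo[OF qV TV[of 0]] T0 by auto
  obtain g where g: "g 0 = q" "g j = T m" "\<forall>i<j. E (g i) (g (Suc i))" "\<forall>i\<le>j. g i \<in> V \<and> d q (g i) = i"
    using geo[OF qV TV[of m]] Tm by auto
  define c where "c = (\<lambda>k. if k \<le> j then f k else if k \<le> j+m then T (k - j) else g (n - k))"
  have c0: "c 0 = q" using c_def f by simp
  have "Cfg c" unfolding Cfg_def
  proof (intro conjI allI impI)
    show "c n = c 0" using c_def f g j1 m23 by auto
    fix k
    show "k \<le> n \<Longrightarrow> c k \<in> V"
    proof -
      assume kn: "k \<le> n"
      show "c k \<in> V"
      proof (cases "k \<le> j")
        case True then show ?thesis using c_def f(4) by simp
      next
        case F1: False
        show ?thesis
        proof (cases "k \<le> j+m")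
          case True
          then have "c k = T (k - j)" using c_def F1 by simp
          moreover have "k - j \<le> m" using True by simp
          ultimately show ?thesis using TV by simp
        next
          case False
          then have "c k = g (n - k)" using c_def F1 by simp
          moreover have "n - k \<le> j" using False by simp
          ultimately show ?thesis using g(4) by simp
        qed
      qed
    qed
    show "k < n \<Longrightarrow> E (c k) (c (Suc k))"
    proof -
      assume kn: "k < n"
      consider "k < j" | "k = j" | "j < k" "k < j+m" | "k = j+m" | "j+m < k" by linarith
      then show ?thesis
      proof cases
        case 1 then show ?thesis using c_def f by simp
      next
        case 2 then show ?thesis using c_def f TE[of 0] m23 by auto
      next
        case 3
        then have "c k = T (k - j)" "c (Suc k) = T (Suc (k - j))" using c_def by (auto simp: Suc_diff_le)
        then show ?thesis using TE[of "k-j"] 3 by simp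
      next
        case 4
        have a: "c k = T m" using c_def 4 m23 by auto
        have b: "c (Suc k) = g (j - 1)" using c_def 4 m23 by auto
        have jj: "j - 1 < j" "Suc (j-1) = j" using j1 by auto
        have "E (g (j-1)) (g j)" using g(3) jj by metis
        then show ?thesis using a b g Esym by simp
      next
        case 5
        have a: "c k = g (n - k)" and b: "c (Suc k) = g (n - Suc k)" using c_def 5 by auto
        have "E (g (n - Suc k)) (g (Suc (n - Suc k)))" using g 5 kn by auto
        moreover have "Suc (n - Suc k) = n - k" using kn by simp
        ultimately show ?thesis using a b Esym by simp
      qed
    qed
    show "k \<le> n \<Longrightarrow> d (c 0) (c k) = min k (n - k)"
    proof -
      assume kn: "k \<le> n"
      consider "k \<le> j" | "j < k" "k < j+m" | "k = j+m" | "j+m < k" by linarith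
      then show ?thesis
      proof cases
        case 1 then show ?thesis using c_def f c0 by simp
      next
        case 2
        then have "c k = T (k - j)" using c_def by simp
        moreover have "d q (T (k-j)) = Suc j" using Tmid 2 by simp
        moreover have "min k (n - k) = Suc j" using 2 m23 by auto
        ultimately show ?thesis using c0 by simp
      next
        case 3
        then show ?thesis using c_def c0 Tm m23 by auto
      next
        case 4
        then show ?thesis using c_def c0 g by auto
      qed
    qed
  next
    show "d (c j) (c (j + m)) = m" using c_def f TT m23 by auto
  qed
  then show ?thesis by blast
qed

end

context mc
begin

context
  fixes c assumes C: "Cfg c"
begin

lemma Vc: "k \<le> n \<Longrightarrow> c k \<in> V" using cV[OF C] .

lemma CLc: "s \<le> t \<Longrightarrow> t \<le> n \<Longrightarrow> d (c s) (c t) = cyc s t" using CL[OF C] .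

lemma E2F: assumes J: "axiom_J0' V (interval V E)" and m2: "m = 2" and jj: "j \<ge> 2" shows False
proof -
  have p: "c 0 \<in> V" using c0V[OF C] .
  have V: "c (j-1) \<in> V" "c j \<in> V" "c (j+1) \<in> V" "c (j+2) \<in> V" "c (n-1) \<in> V" using Vc m2 by auto
  have az: "d (c (j-1)) (c (j+1)) = 2" using CLc[of "j-1" "j+1"] m2 jj unfolding cyc_def by simp
  have au: "d (c (j-1)) (c j) = 1" using CLc[of "j-1" "j"] m2 jj unfolding cyc_def by simp
  have uz: "d (c j) (c (j+1)) = 1" using CLc[of "j" "j+1"] m2 jj unfolding cyc_def by simp
  have ub: "d (c j) (c (n-1)) = j+1" using CLc[of "j" "n-1"] m2 jj unfolding cyc_def by simp
  have zb: "d (c (j+1)) (c (n-1)) = j" using CLc[of "j+1" "n-1"] m2 jj unfolding cyc_def by simp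
  have ab: "d (c (j-1)) (c (n-1)) = j" using CLc[of "j-1" "n-1"] m2 jj unfolding cyc_def by simp
  have av: "d (c (j-1)) (c (j+2)) = 3" using CLc[of "j-1" "j+2"] m2 jj unfolding cyc_def by simp
  have vb: "d (c (j+2)) (c (n-1)) = j - 1" using CLc[of "j+2" "n-1"] m2 jj unfolding cyc_def by simp
  have zv: "d (c (j+1)) (c (j+2)) = 1" using CLc[of "j+1" "j+2"] m2 jj unfolding cyc_def by simp
  have S: "\<And>x y. x \<in> V \<Longrightarrow> y \<in> V \<Longrightarrow> d x y = d y x" using dsym by blast
  have dis: "distinct [c (j-1), c j, c (j+1), c (n-1)]"
    using au uz az ub zb ab d0 V by auto
  have i1: "c j \<in> interval V E (c (j-1)) (c (j+1))" using intv V au uz az by simp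
  have i2: "c (j+1) \<in> interval V E (c j) (c (n-1))" using intv V uz zb ub by simp
  have ni: "c j \<notin> interval V E (c (j-1)) (c (n-1))" using intv au ub ab by simp
  obtain w where wi: "w \<in> interval V E (c (j-1)) (c (j+1))" "w \<in> interval V E (c j) (c (n-1))"
    and wn: "w \<notin> {c (j-1), c j, c (j+1), c (n-1)}"
    using J V dis i1 i2 ni unfolding axiom_J0'_def by blast
  have wV: "w \<in> V" and w1: "d (c (j-1)) w + d w (c (j+1)) = 2" and w2: "d (c j) w + d w (c (n-1)) = j+1"
    using wi intv az ub by auto
  have "d (c (j-1)) w \<noteq> 0" "d w (c (j+1)) \<noteq> 0" "d (c j) w \<noteq> 0"
    using d0E[OF V(1) wV] d0E[OF wV V(3)] d0E[OF V(2) wV] wn by auto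
  then have aw: "d (c (j-1)) w = 1" and wz: "d w (c (j+1)) = 1" and uw1: "d (c j) w \<ge> 1" using w1 by auto
  have Eaw: "E (c (j-1)) w" and Ewz: "E w (c (j+1))" using aw wz d1E V wV by auto
  have uw2: "d (c j) w \<le> 2" using tri[OF V(2) V(1) wV] au aw S V by simp
  have wv2: "d w (c (j+2)) \<le> 2" using tri[OF wV V(3) V(4)] wz zv by simp
  have avw: "d (c (j-1)) (c (j+2)) \<le> d (c (j-1)) w + d w (c (j+2))" using tri V wV by blast
  show False
  proof (cases "d (c j) w = 2")
    case True
    then have wb: "d w (c (n-1)) = j - 1" using w2 by simp
    consider "d w (c (j+2)) = 0" | "d w (c (j+2)) = 1" | "d w (c (j+2)) = 2" using wv2 by linarith
    then show False
    proof cases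
      case 1 then show False using avw av aw by simp
    next
      case 2 then show False using avw av aw by simp
    next
      case 3
      have "n \<le> 2*(j-1)+2"
      proof (rule sbn2[OF V(5)])
        show "d (c (n-1)) w = j - 1" using wb S wV V by metis
        show "d (c (n-1)) (c (j+2)) = j - 1" using vb S V by metis
        have "d (c (n-1)) (c (j+1)) = j" using zb S V by metis
        then show "d (c (n-1)) (c (j+1)) = Suc (j-1)" using jj by simp
        show "E w (c (j+1))" using Ewz .
        show "E (c (j+1)) (c (j+2))" using zv d1E V by blast
        show "d w (c (j+2)) = 2" using 3 .
      qed
      then show False using m2 jj by simp
    qed
  next
    case False
    then have uw: "d (c j) w = 1" using uw1 uw2 by simp
    then have wb: "d w (c (n-1)) = j" using w2 by simp
    have wv: "d w (c (j+2)) = 2" using avw av aw wv2 by simp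
    have r1: "1 \<le> j" "j \<le> n - 1" using jj m2 by auto
    have lev: "d (c 0) w = min j (n - j)"
      using force_lev[OF C r1 _ wV] Eaw Ewz m2 by auto
    have C': "Cfg (c(j := w))"
    proof (rule repl[OF C r1 wV])
      show "E (c (j-1)) w" using Eaw .
      show "E w (c (j+1))" using Ewz .
      show "d (c 0) w = min j (n-j)" using lev .
      show "j = j \<Longrightarrow> d w (c (j + m)) = m" using wv m2 by simp
      show "j = j+m \<Longrightarrow> d (c j) w = m" using m2 by simp
    qed
    have "d ((c(j := w)) j) ((c(j := w)) (n-1)) = cyc j (n-1)" using CL[OF C', of j "n-1"] m2 jj by simp
    moreover have "(c(j := w)) (n-1) = c (n-1)" using m2 jj by simp
    ultimately show False using wb m2 jj unfolding cyc_def by simp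
  qed
qed


lemma E3F: assumes J: "axiom_J0' V (interval V E)" and m3: "m = 3" shows False
proof -
  have jj: "j \<ge> 2" using j2[OF C m3] .
  have p: "c 0 \<in> V" using c0V[OF C] .
  have V: "c (j-1) \<in> V" "c j \<in> V" "c (j+1) \<in> V" "c (j+2) \<in> V" "c (j+3) \<in> V" "c (n-2) \<in> V"
    using Vc m3 by auto
  have S: "\<And>x y. x \<in> V \<Longrightarrow> y \<in> V \<Longrightarrow> d x y = d y x" using dsym by blast
  have az: "d (c (j-1)) (c (j+1)) = 2" using CLc[of "j-1" "j+1"] m3 jj unfolding cyc_def by simp
  have au: "d (c (j-1)) (c j) = 1" using CLc[of "j-1" "j"] m3 jj unfolding cyc_def by simp
  have uz: "d (c j) (c (j+1)) = 1" using CLc[of "j" "j+1"] m3 jj unfolding cyc_def by simp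
  have ub: "d (c j) (c (n-2)) = j+1" using CLc[of "j" "n-2"] m3 jj unfolding cyc_def by simp
  have zb: "d (c (j+1)) (c (n-2)) = j" using CLc[of "j+1" "n-2"] m3 jj unfolding cyc_def by simp
  have ab: "d (c (j-1)) (c (n-2)) = j+1" using CLc[of "j-1" "n-2"] m3 jj unfolding cyc_def by simp
  have z2b: "d (c (j+2)) (c (n-2)) = j - 1" using CLc[of "j+2" "n-2"] m3 jj unfolding cyc_def by simp
  have az2: "d (c (j-1)) (c (j+2)) = 3" using CLc[of "j-1" "j+2"] m3 jj unfolding cyc_def by simp
  have av: "d (c (j-1)) (c (j+3)) \<ge> 3" using CLc[of "j-1" "j+3"] m3 jj unfolding cyc_def by simp
  have z1v: "d (c (j+1)) (c (j+3)) = 2" using CLc[of "j+1" "j+3"] m3 jj unfolding cyc_def by simp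
  have z12: "d (c (j+1)) (c (j+2)) = 1" using CLc[of "j+1" "j+2"] m3 jj unfolding cyc_def by simp
  have z2v: "d (c (j+2)) (c (j+3)) = 1" using CLc[of "j+2" "j+3"] m3 jj unfolding cyc_def by simp
  have E12: "E (c (j+1)) (c (j+2))" and E2v: "E (c (j+2)) (c (j+3))" using z12 z2v d1E V by auto
  have Lz1: "d (c 0) (c (j+1)) = Suc j" using levA[OF C, of "j+1"] by simp
  have Lz2: "d (c 0) (c (j+2)) = Suc j" using levB[OF C, of "j+2"] m3 by simp
  have Lv: "d (c 0) (c (j+3)) = j" using levB[OF C, of "j+3"] m3 by simp
  have dis: "distinct [c (j-1), c j, c (j+1), c (n-2)]"
    using au uz az ub zb ab d0 V by auto
  have i1: "c j \<in> interval V E (c (j-1)) (c (j+1))" using intv V au uz az by simp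
  have i2: "c (j+1) \<in> interval V E (c j) (c (n-2))" using intv V uz zb ub by simp
  have ni: "c j \<notin> interval V E (c (j-1)) (c (n-2))" using intv au ub ab by simp
  obtain w where wi: "w \<in> interval V E (c (j-1)) (c (j+1))" "w \<in> interval V E (c j) (c (n-2))"
    and wn: "w \<notin> {c (j-1), c j, c (j+1), c (n-2)}"
    using J V dis i1 i2 ni unfolding axiom_J0'_def by blast
  have wV: "w \<in> V" and w1: "d (c (j-1)) w + d w (c (j+1)) = 2" and w2: "d (c j) w + d w (c (n-2)) = j+1"
    using wi intv az ub by auto
  have "d (c (j-1)) w \<noteq> 0" "d w (c (j+1)) \<noteq> 0" "d (c j) w \<noteq> 0"
    using d0E[OF V(1) wV] d0E[OF wV V(3)] d0E[OF V(2) wV] wn by auto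
  then have aw: "d (c (j-1)) w = 1" and wz: "d w (c (j+1)) = 1" and uw1: "d (c j) w \<ge> 1" using w1 by auto
  have Eaw: "E (c (j-1)) w" and Ewz: "E w (c (j+1))" using aw wz d1E V wV by auto
  have r1: "1 \<le> j" "j \<le> n - 1" using jj m3 by auto
  have lev: "d (c 0) w = min j (n - j)"
    using force_lev[OF C r1 _ wV] Eaw Ewz m3 by auto
  then have levj: "d (c 0) w = j" using m3 by simp
  have nwz2: "\<not> E w (c (j+2))" using R4[OF C m3, of w] Ewz levj by blast
  have wnz2: "w \<noteq> c (j+2)" using levj Lz2 by auto
  have uw2: "d (c j) w \<le> 2" using tri[OF V(2) V(1) wV] au aw S V by simp
  show False
  proof (cases "d (c j) w = 2")
    case True
    then have wb: "d w (c (n-2)) = j - 1" using w2 by simp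
    have wz2: "d w (c (j+2)) \<le> 2" using tri[OF wV V(3) V(4)] wz z12 by simp
    have "d w (c (j+2)) \<noteq> 0" using d0E[OF wV V(4)] wnz2 by auto
    moreover have "d w (c (j+2)) \<noteq> 1" using d1E[OF wV V(4)] nwz2 by auto
    ultimately have wz22: "d w (c (j+2)) = 2" using wz2 by simp
    have "n \<le> 2*(j-1)+2"
    proof (rule sbn2[OF V(6)])
      show "d (c (n-2)) w = j - 1" using wb S wV V by metis
      show "d (c (n-2)) (c (j+2)) = j - 1" using z2b S V by metis
      have "d (c (n-2)) (c (j+1)) = j" using zb S V by metis
      then show "d (c (n-2)) (c (j+1)) = Suc (j-1)" using jj by simp
      show "E w (c (j+1))" using Ewz .
      show "E (c (j+1)) (c (j+2))" using E12 .
      show "d w (c (j+2)) = 2" using wz22 .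
    qed
    then show False using m3 jj by simp
  next
    case False
    then have uw: "d (c j) w = 1" using uw1 uw2 by simp
    then have wb: "d w (c (n-2)) = j" using w2 by simp
    have wv3: "d w (c (j+3)) \<le> 3"
    proof -
      have "d w (c (j+3)) \<le> d w (c (j+1)) + d (c (j+1)) (c (j+3))" using tri wV V by blast
      then show ?thesis using wz z1v by simp
    qed
    show False
    proof (cases "d w (c (j+3)) = 3")
      case True
      have C': "Cfg (c(j := w))"
      proof (rule repl[OF C r1 wV])
        show "E (c (j-1)) w" using Eaw .
        show "E w (c (j+1))" using Ewz .
        show "d (c 0) w = min j (n-j)" using lev .
        show "j = j \<Longrightarrow> d w (c (j + m)) = m" using True m3 by simp
        show "j = j+m \<Longrightarrow> d (c j) w = m" using m3 by simp
      qed
      have "d ((c(j := w)) j) ((c(j := w)) (n-2)) = cyc j (n-2)" using CL[OF C', of j "n-2"] m3 jj by simp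
      moreover have "(c(j := w)) (n-2) = c (n-2)" using m3 jj by simp
      ultimately show False using wb m3 jj unfolding cyc_def by simp
    next
      case False
      have avw: "d (c (j-1)) (c (j+3)) \<le> d (c (j-1)) w + d w (c (j+3))" using tri V wV by blast
      have "d w (c (j+3)) \<ge> 2" using avw av aw by simp
      then have wv: "d w (c (j+3)) = 2" using wv3 False by simp
      obtain x0 where x0: "E w x0" "E x0 (c (j+3))" using d2E[OF wV V(5) wv] by blast
      have x0V: "x0 \<in> V" using x0 EV2 by blast
      have lx0: "d (c 0) x0 \<le> Suc j" using tri[OF p V(5) x0V] Lv x0 d1s by fastforce
      show False
      proof (cases "d (c 0) x0 = Suc j")
        case True
        have "n \<le> 2*j+2" using sbn2[OF p levj Lv True x0 wv] .
        then show False using m3 by simp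
      next
        case F0: False
        have nz: "x0 \<noteq> c (j+1)" "x0 \<noteq> c (j+2)" using F0 Lz1 Lz2 by auto
        show False
        proof (cases "E x0 (c (j+1))")
          case T1: True
          show False
          proof (cases "E x0 (c (j+2))")
            case True
            have "d (c 0) x0 \<ge> j" using tri[OF p x0V V(3)] Lz1 T1 d1s by fastforce
            then have "d (c 0) x0 = j" using lx0 F0 by simp
            then show False using R4[OF C m3, of x0] T1 True Esym by blast
          next
            case F2: False
            have "d x0 (c (j+2)) = 2" using d2[of x0 "c (j+1)" "c (j+2)"] T1 E12 F2 nz by blast
            then have "n \<le> 2*1+2" using sbn2[OF x0V, of "c (j+1)" 1 "c (j+3)" "c (j+2)"] T1 x0 E12 E2v z1v d1s by auto
            then show False using m3 jj by simp
          qed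
        next
          case F1: False
          show False
          proof (cases "E x0 (c (j+2))")
            case True
            have a: "d (c (j+1)) x0 = 2" using d2[of "c (j+1)" "c (j+2)" x0] True E12 F1 nz Esym by metis
            have b: "d w (c (j+2)) = 2" using d2[of w "c (j+1)" "c (j+2)"] Ewz E12 nwz2 wnz2 by blast
            have "n \<le> 2*1+2" using sbn2[OF wV, of "c (j+1)" 1 x0 "c (j+2)"] Ewz x0 E12 True a b d1s Esym by auto
            then show False using m3 jj by simp
          next
            case F2: False
            have a1: "w \<noteq> c (j+3) \<and> \<not> E w (c (j+3))" using wv d1 d0 V by auto
            have a2: "c (j+1) \<noteq> c (j+3) \<and> \<not> E (c (j+1)) (c (j+3))" using z1v d1 d0 V by auto
            show False
              by (rule c5_F[OF nc5, of w "c (j+1)" "c (j+2)" "c (j+3)" x0])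
                 (use a1 a2 Ewz E12 E2v x0 nwz2 wnz2 F1 F2 nz Esym in auto)
          qed
        qed
      qed
    qed
  qed
qed

end
end

context cg
begin

lemma br_noC5: assumes br: "axiom_br V (interval V E)" shows "noC5"
  unfolding noC5_def
proof (intro allI impI notI)
  fix cs assume ic: "isometric_cycle V E cs" and l5: "length cs = 5"
  define c where "c = (\<lambda>i. cs ! i)"
  have hE: "\<And>i. i < 5 \<Longrightarrow> E (c i) (c (Suc i mod 5))" using iso_facts(1)[OF ic] l5 c_def by auto
  have hD: "\<And>i k. i \<le> k \<Longrightarrow> k < 5 \<Longrightarrow> d (c i) (c k) = min (k - i) (5 - (k - i))"
    using iso_facts(2)[OF ic] l5 c_def by auto
  have hV: "\<And>i. i < 5 \<Longrightarrow> c i \<in> V" using iso_facts(3)[OF ic] l5 c_def by auto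
  have V: "c 0 \<in> V" "c 1 \<in> V" "c 2 \<in> V" "c 3 \<in> V" "c 4 \<in> V" using hV by auto
  have d01: "d (c 0) (c 1) = 1" using hD[of 0 1] by simp
  have d04: "d (c 0) (c 4) = 1" using hD[of 0 4] by simp
  have d21: "d (c 2) (c 1) = 1" using hD[of 1 2] dsym V by simp
  have d43: "d (c 4) (c 3) = 1" using hD[of 3 4] dsym V by simp
  have d32: "d (c 3) (c 2) = 1" using hD[of 2 3] dsym V by simp
  have d42: "d (c 4) (c 2) = 2" using hD[of 2 4] dsym V by simp
  have d03: "d (c 0) (c 3) = 2" using hD[of 0 3] by simp
  have d13: "d (c 1) (c 3) = 2" using hD[of 1 3] by simp
  have "interval V E (c 0) (c 1) = {c 0, c 1}" using intv_edge V d01 by simp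
  moreover have "interval V E (c 0) (c 4) = {c 0, c 4}" using intv_edge V d04 by simp
  moreover have "interval V E (c 2) (c 1) = {c 2, c 1}" using intv_edge V d21 by simp
  moreover have "c 3 \<in> interval V E (c 4) (c 2)" using intv V d43 d32 d42 by simp
  ultimately have "interval V E (c 0) (c 3) = {c 0, c 3} \<or> interval V E (c 1) (c 3) = {c 1, c 3}"
    using br[unfolded axiom_br_def, rule_format, of "c 4" "c 2" "c 0" "c 1" "c 3"] V by blast
  then show False using intv_edge V d03 d13 by auto
qed

lemma bridged_noC5: "bridged V E \<Longrightarrow> noC5"
  unfolding bridged_def noC5_def by fastforce

lemma min_bump: assumes "\<not> nsb" shows "\<exists>q k m T. SBump q k m T \<and> noSB (2*k+m)"
proof -
  define P where "P = (\<lambda>N. \<exists>q k m T. SBump q k m T \<and> N = 2*k+m)"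
  obtain q0 k0 m0 T0 where "SBump q0 k0 m0 T0" using assms unfolding nsb_def by blast
  then have ex: "\<exists>N. P N" unfolding P_def by blast
  define N where "N = (LEAST N. P N)"
  have "P N" unfolding N_def using ex by (rule LeastI_ex)
  then obtain q k m T where sb: "SBump q k m T" and N: "N = 2*k+m" unfolding P_def by blast
  have "noSB N" unfolding noSB_def
  proof (intro allI impI)
    fix q' k' m' T' assume "SBump q' k' m' T'"
    then have "P (2*k'+m')" unfolding P_def by blast
    then show "N \<le> 2*k'+m'" unfolding N_def by (rule Least_le)
  qed
  then show ?thesis using sb N by blast
qed

lemma mk_mc: assumes "SBump q k m T" "noSB (2*k+m)" "noC5" shows "mc V E k m"
proof (intro mc.intro mc_axioms.intro)
  show "cg V E" by (rule cg_axioms)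
  show "m = 2 \<or> m = 3" using assms(1) unfolding SBump_def by blast
  show "noC5" by (rule assms(3))
  show "noSB (2*k+m)" by (rule assms(2))
qed

lemma bridged_nsb: assumes br: "bridged V E" shows "nsb"
proof (rule ccontr)
  assume "\<not> nsb"
  then obtain q k m T where sb: "SBump q k m T" and ns: "noSB (2*k+m)" using min_bump by blast
  have nc: "noC5" using bridged_noC5 br by blast
  interpret M: mc V E k m using mk_mc[OF sb ns nc] .
  obtain c where C: "M.Cfg c" using M.mk_cfg sb by blast
  have "isometric_cycle V E (map c [0..<2*k+m])" using M.cfg_iso[OF C] .
  then have "length (map c [0..<2*k+m]) \<le> 3" using br unfolding bridged_def by blast
  moreover have "k \<ge> 1" using M.j1[OF C] .
  moreover have "m \<ge> 2" using M.m23 by auto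
  ultimately show False by simp
qed

lemma J0br_nsb: assumes J: "axiom_J0' V (interval V E)" and br: "axiom_br V (interval V E)" shows "nsb"
proof (rule ccontr)
  assume "\<not> nsb"
  then obtain q k m T where sb: "SBump q k m T" and ns: "noSB (2*k+m)" using min_bump by blast
  have nc: "noC5" using br_noC5 br by blast
  interpret M: mc V E k m using mk_mc[OF sb ns nc] .
  obtain c where C: "M.Cfg c" using M.mk_cfg sb by blast
  have k1: "k \<ge> 1" using M.j1[OF C] .
  show False
  proof (cases "m = 2")
    case m2: True
    show False
    proof (cases "k = 1")
      case True
      have V: "c 0 \<in> V" "c 1 \<in> V" "c 2 \<in> V" "c 3 \<in> V" using M.cV[OF C] m2 True by auto
      have d01: "d (c 0) (c 1) = 1" using M.cL[OF C, of 1] m2 True by simp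
      have d03: "d (c 0) (c 3) = 1" using M.cL[OF C, of 3] m2 True by simp
      have d02: "d (c 0) (c 2) = 2" using M.cL[OF C, of 2] m2 True by simp
      have d13: "d (c 1) (c 3) = 2" using M.cT[OF C] m2 True by (simp add: numeral_3_eq_3)
      have d12: "d (c 1) (c 2) = 1" using M.cE[OF C, of 1] d1 m2 True by (simp add: numeral_2_eq_2)
      have d23: "d (c 2) (c 3) = 1" using M.cE[OF C, of 2] d1 m2 True by (simp add: numeral_3_eq_3)
      have "interval V E (c 0) (c 0) = {c 0, c 0}" using intv_edge[OF V(1) V(1)] d0[OF V(1)] by simp
      moreover have "interval V E (c 0) (c 1) = {c 0, c 1}" using intv_edge V d01 by simp
      moreover have "interval V E (c 3) (c 0) = {c 3, c 0}" using intv_edge V d03 dsym by simp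
      moreover have "c 2 \<in> interval V E (c 1) (c 3)" using intv V d12 d23 d13 by simp
      ultimately have "interval V E (c 0) (c 2) = {c 0, c 2} \<or> interval V E (c 0) (c 2) = {c 0, c 2}"
        using br[unfolded axiom_br_def, rule_format, of "c 1" "c 3" "c 0" "c 0" "c 2"] V by blast
      then show False using intv_edge[OF V(1) V(3)] d02 by simp
    next
      case False
      then show False using M.E2F[OF C J m2] k1 by simp
    qed
  next
    case False
    then have "m = 3" using M.m23 by simp
    then show False using M.E3F[OF C J] by blast
  qed
qed

end

theorem theorem7:
  fixes V :: "'a set" and E :: "'a \<Rightarrow> 'a \<Rightarrow> bool"
  assumes "connected_graph V E"
  shows "(axiom_J0' V (interval V E) \<and> axiom_br V (interval V E)) \<longleftrightarrow> bridged V E"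
proof -
  interpret cg V E by (rule cg.intro) (rule assms)
  show ?thesis
  proof
    assume h: "axiom_J0' V (interval V E) \<and> axiom_br V (interval V E)"
    then have "nsb" using J0br_nsb by blast
    moreover have "noC5" using h br_noC5 by blast
    ultimately show "bridged V E" using nsb_bridged by blast
  next
    assume h: "bridged V E"
    then have "nsb" using bridged_nsb by blast
    moreover have "noC5" using h bridged_noC5 by blast
    ultimately show "axiom_J0' V (interval V E) \<and> axiom_br V (interval V E)"
      using nsb_J0 nsb_br by blast
  qed
qed


end
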